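(* Suppose conditions (i)–(iii) of the context hold. Let $p\in\mathbb{N}$, $t\in[0,1]$, $g\in H$, and let $\widetilde Y(t):=Q_{h,k}^\beta\Pi_hg+Q_{h,k}^\beta P_h^\beta W^\beta(t)$ (the strong solution of $\mathrm{d}\widetilde Y(t)=Q_{h,k}^\beta P_h^\beta\,\mathrm{d}W^\beta(t)$, $\widetilde Y(0)=Q_{h,k}^\beta\Pi_hg$). Then the $p$-th moment of $\widetilde Y(t)$ exists, and for $p\ge2$ there exist $k_0>0$ and a constant $C>0$, independent of $h$ and $k$, such that for all sufficiently small $h\in(0,h_0)$ and $k\in(0,k_0)$, \[ \mathbb{E}\bigl[\|\widetilde Y(t)\|_H^p\bigr]\le C\bigl(1+e^{-p\pi^2/(2k)}h^{-pd/2}+\|g\|_H^p\bigr). \]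
   Context: $H$ separable real Hilbert space; $L\colon\mathscr{D}(L)\subset H\to H$ densely defined, self-adjoint, positive definite with compact inverse, $H$-orthonormal eigenvectors $\{e_j\}$, nondecreasing eigenvalues $\{\lambda_j\}$ with $c_\lambda j^\alpha\le\lambda_j\le C_\lambda j^\alpha$ ($\alpha,c_\lambda,C_\lambda>0$); $\beta\in(0,1)$. $(V_h)_{h\in(0,1)}$ finite-dimensional subspaces of $\mathscr{D}(L^{1/2})$, $N_h=\dim V_h$, $\Pi_h$ the $H$-orthogonal projection onto $V_h$, $L_h\colon V_h\to V_h$ with $(L_h\psi_h,\phi_h)_H=\langle L\psi_h,\phi_h\rangle$, $H$-orthonormal eigenvectors $\{e_{j,h}\}_{j=1}^{N_h}$, nondecreasing eigenvalues $\{\lambda_{j,h}\}$. $P_h^\beta\colon H\to V_h$, $P_h^\beta g:=\sum_{j=1}^{N_h}\lambda_j^\beta(g,e_j)_He_{j,h}$. For $k>0$, $y_\ell=\ell k$, $K^-=\lceil\pi^2/(4\beta k^2)\rceil$, $K^+=\lceil\pi^2/(4(1-\beta)k^2)\rceil$, $Q_{h,k}^\beta:=\frac{2k\sin(\pi\beta)}{\pi}\sum_{\ell=-K^-}^{K^+}e^{2\beta y_\ell}(\mathrm{Id}_{V_h}+e^{2y_\ell}L_h)^{-1}$. $\{B_j\}$ independent standard Brownian motions, $W^\beta(t):=\sum_j\lambda_j^{-\beta}B_j(t)e_j$. Conditions: (i) there is $d\in\mathbb{N}$ with $N_h\propto h^{-d}$; (ii) there are $C_1,C_2>0$, $h_0\in(0,1)$,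 $r,s>0$, $q>1$ with $\lambda_j\le\lambda_{j,h}\le\lambda_j+C_1h^r\lambda_j^q$ and $\|e_j-e_{j,h}\|_H^2\le C_2h^{2s}\lambda_j^q$ for all $h\in(0,h_0)$, $j\le N_h$; (iii) $\frac1{2\beta}<\alpha\le\min\{\frac{r}{(q-1)d},\frac{2s}{qd}\}$. *)

theory Defs
  imports "HOL-Probability.Probability"
begin

text \<open>Spectral data of L: H-orthonormal eigenvectors e j and eigenvalues lam j,
  indexed by j >= 1 (index 0 unused).\<close>

definition form_dom :: "(nat \<Rightarrow> real) \<Rightarrow> (nat \<Rightarrow> 'a::real_inner) \<Rightarrow> 'a set" where
  "form_dom lam e = {x. summable (\<lambda>j. lam (Suc j) * (inner x (e (Suc j)))\<^sup>2)}"

definition L_form :: "(nat \<Rightarrow> real) \<Rightarrow> (nat \<Rightarrow> 'a::real_inner) \<Rightarrow> 'a \<Rightarrow> 'a \<Rightarrow> real" where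
  "L_form lam e \<psi> \<phi> = (\<Sum>j. lam (Suc j) * inner \<psi> (e (Suc j)) * inner \<phi> (e (Suc j)))"

definition discrete_op :: "'a::real_inner set \<Rightarrow> (nat \<Rightarrow> real) \<Rightarrow> (nat \<Rightarrow> 'a) \<Rightarrow> 'a \<Rightarrow> 'a" where
  "discrete_op V lam e \<psi> = (THE w. w \<in> V \<and> (\<forall>\<phi>\<in>V. inner w \<phi> = L_form lam e \<psi> \<phi>))"

definition resolv :: "'a::real_vector set \<Rightarrow> ('a \<Rightarrow> 'a) \<Rightarrow> real \<Rightarrow> 'a \<Rightarrow> 'a" where
  "resolv V A y v = (THE u. u \<in> V \<and> u + exp (2 * y) *\<^sub>R A u = v)"

definition Qop :: "real \<Rightarrow> real \<Rightarrow> 'a::real_vector set \<Rightarrow> ('a \<Rightarrow> 'a) \<Rightarrow> 'a \<Rightarrow> 'a" where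
  "Qop \<beta> k V A v =
     (2 * k * sin (pi * \<beta>) / pi) *\<^sub>R
     (\<Sum>l\<in>{- \<lceil>pi\<^sup>2 / (4 * \<beta> * k\<^sup>2)\<rceil> .. \<lceil>pi\<^sup>2 / (4 * (1 - \<beta>) * k\<^sup>2)\<rceil>}.
        exp (2 * \<beta> * (of_int l * k)) *\<^sub>R resolv V A (of_int l * k) v)"

definition orth_proj :: "'a::real_inner set \<Rightarrow> 'a \<Rightarrow> 'a" where
  "orth_proj V x = (THE y. y \<in> V \<and> (\<forall>z\<in>V. inner (x - y) z = 0))"

definition P_op :: "real \<Rightarrow> (nat \<Rightarrow> real) \<Rightarrow> (nat \<Rightarrow> 'a::real_inner) \<Rightarrow> nat \<Rightarrow> (nat \<Rightarrow> 'a) \<Rightarrow> 'a \<Rightarrow> 'a" where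
  "P_op \<beta> lam e N eh g = (\<Sum>j=1..N. (lam j powr \<beta> * inner g (e j)) *\<^sub>R eh j)"

definition W_beta :: "real \<Rightarrow> (nat \<Rightarrow> real) \<Rightarrow> (nat \<Rightarrow> 'a::real_inner) \<Rightarrow> (nat \<Rightarrow> real \<Rightarrow> 'w \<Rightarrow> real) \<Rightarrow> real \<Rightarrow> 'w \<Rightarrow> 'a" where
  "W_beta \<beta> lam e B t \<omega> = (\<Sum>j. (lam (Suc j) powr (- \<beta>) * B (Suc j) t \<omega>) *\<^sub>R e (Suc j))"

definition std_BM :: "'w measure \<Rightarrow> (real \<Rightarrow> 'w \<Rightarrow> real) \<Rightarrow> bool" where
  "std_BM M B \<longleftrightarrow> prob_space M
     \<and> (\<forall>t\<ge>0. B t \<in> borel_measurable M)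
     \<and> (AE \<omega> in M. B 0 \<omega> = 0)
     \<and> (AE \<omega> in M. continuous_on {0..} (\<lambda>t. B t \<omega>))
     \<and> (\<forall>s t. 0 \<le> s \<and> s < t \<longrightarrow>
          distributed M lborel (\<lambda>\<omega>. B t \<omega> - B s \<omega>)
            (\<lambda>x. ennreal (normal_density 0 (sqrt (t - s)) x)))
     \<and> (\<forall>ts::real list. sorted_wrt (<) ts \<and> (\<forall>x\<in>set ts. 0 \<le> x) \<longrightarrow>
          prob_space.indep_vars M (\<lambda>_. borel) (\<lambda>i \<omega>. B (ts ! Suc i) \<omega> - B (ts ! i) \<omega>)
            {..<length ts - 1})"

definition Y_tilde :: "real \<Rightarrow> (nat \<Rightarrow> real) \<Rightarrow> (nat \<Rightarrow> 'a::{real_inner,complete_space})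
    \<Rightarrow> 'a set \<Rightarrow> nat \<Rightarrow> (nat \<Rightarrow> 'a) \<Rightarrow> real \<Rightarrow> (nat \<Rightarrow> real \<Rightarrow> 'w \<Rightarrow> real) \<Rightarrow> 'a \<Rightarrow> real \<Rightarrow> 'w \<Rightarrow> 'a" where
  "Y_tilde \<beta> lam e Vh Nh ehh k B g t \<omega> =
     Qop \<beta> k Vh (discrete_op Vh lam e) (orth_proj Vh g)
     + Qop \<beta> k Vh (discrete_op Vh lam e) (P_op \<beta> lam e Nh ehh (W_beta \<beta> lam e B t \<omega>))"

end

theory Submission
  imports Defs
begin


definition ONS :: "(nat \<Rightarrow> 'a::real_inner) \<Rightarrow> nat \<Rightarrow> bool" where
  "ONS u n \<longleftrightarrow> (\<forall>i\<in>{1..n}. \<forall>j\<in>{1..n}. inner (u i) (u j) = (if i = j then 1 else 0))"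

lemma ons_inner_sum:
  assumes "ONS u n" "i \<in> {1..n}"
  shows "inner (\<Sum>j=1..n. c j *\<^sub>R u j) (u i) = c i"
proof -
  have "inner (\<Sum>j=1..n. c j *\<^sub>R u j) (u i) = (\<Sum>j=1..n. c j * (if j = i then 1 else 0))"
    using assms unfolding ONS_def by (auto simp: inner_sum_left intro!: sum.cong)
  also have "\<dots> = c i" using assms(2) by (simp add: if_distrib sum.delta cong: if_cong)
  finally show ?thesis .
qed

lemma ons_norm_sum:
  assumes "ONS u n"
  shows "(norm (\<Sum>j=1..n. c j *\<^sub>R u j))\<^sup>2 = (\<Sum>j=1..n. (c j)\<^sup>2)"
proof -
  have "(norm (\<Sum>j=1..n. c j *\<^sub>R u j))\<^sup>2 = inner (\<Sum>j=1..n. c j *\<^sub>R u j) (\<Sum>j=1..n. c j *\<^sub>R u j)"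
    by (simp add: power2_norm_eq_inner)
  also have "\<dots> = (\<Sum>j=1..n. c j * inner (\<Sum>i=1..n. c i *\<^sub>R u i) (u j))"
    by (simp add: inner_sum_right)
  also have "\<dots> = (\<Sum>j=1..n. (c j)\<^sup>2)"
    using ons_inner_sum[OF assms] by (auto simp: power2_eq_square intro!: sum.cong)
  finally show ?thesis .
qed

lemma ons_span_repr:
  assumes "ONS u n" "x \<in> span (u ` {1..n})"
  shows "x = (\<Sum>j=1..n. inner x (u j) *\<^sub>R u j)"
  using assms(2)
proof (induct rule: span_induct)
  case base
  show ?case unfolding subspace_def
  proof (intro conjI allI impI ballI)
    show "(0::'a) \<in> Collect (\<lambda>x. x = (\<Sum>j=1..n. inner x (u j) *\<^sub>R u j))" by simp
  next
    fix x y assume "x \<in> Collect (\<lambda>x. x = (\<Sum>j=1..n. inner x (u j) *\<^sub>R u j))" "y \<in> Collect (\<lambda>x. x = (\<Sum>j=1..n. inner x (u j) *\<^sub>R u j))"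
    then show "x + y \<in> Collect (\<lambda>x. x = (\<Sum>j=1..n. inner x (u j) *\<^sub>R u j))"
      by (simp add: inner_add_left scaleR_add_left sum.distrib)
  next
    fix c x assume "x \<in> Collect (\<lambda>x. x = (\<Sum>j=1..n. inner x (u j) *\<^sub>R u j))"
    then show "c *\<^sub>R x \<in> Collect (\<lambda>x. x = (\<Sum>j=1..n. inner x (u j) *\<^sub>R u j))"
      by simp (metis (no_types, lifting) scaleR_scaleR scaleR_sum_right sum.cong)
  qed
next
  case (step x)
  then obtain i where i: "i \<in> {1..n}" "x = u i" by auto
  have "(\<Sum>j=1..n. inner (u i) (u j) *\<^sub>R u j) = (\<Sum>j=1..n. (if j = i then u i else 0))"
    using assms(1) i(1) unfolding ONS_def by (intro sum.cong) auto
  also have "\<dots> = u i" using i(1) by (simp add: sum.delta)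
  finally show ?case using i by simp
qed

lemma ons_sum_in_span: "(\<Sum>j=1..n. c j *\<^sub>R u j) \<in> span (u ` {1..n})"
  by (intro span_sum span_scale span_base) auto

lemma ons_coeff_eq:
  assumes "ONS u n" "x \<in> span (u ` {1..n})" "\<And>j. j \<in> {1..n} \<Longrightarrow> inner x (u j) = c j"
  shows "x = (\<Sum>j=1..n. c j *\<^sub>R u j)"
  using ons_span_repr[OF assms(1,2)] assms(3) by (metis (no_types, lifting) sum.cong)


lemma Lform_summable:
  assumes lam: "\<And>j. 0 \<le> lam (Suc j)" and "\<psi> \<in> form_dom lam e" "\<phi> \<in> form_dom lam e"
  shows "summable (\<lambda>j. lam (Suc j) * inner \<psi> (e (Suc j)) * inner \<phi> (e (Suc j)))"
proof (rule summable_comparison_test)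
  have s1: "summable (\<lambda>j. lam (Suc j) * (inner \<psi> (e (Suc j)))\<^sup>2)" "summable (\<lambda>j. lam (Suc j) * (inner \<phi> (e (Suc j)))\<^sup>2)"
    using assms(2,3) unfolding form_dom_def by auto
  show "summable (\<lambda>j. (lam (Suc j) * (inner \<psi> (e (Suc j)))\<^sup>2 + lam (Suc j) * (inner \<phi> (e (Suc j)))\<^sup>2) / 2)"
    by (intro summable_divide summable_add s1)
  show "\<exists>N. \<forall>n\<ge>N. norm (lam (Suc n) * inner \<psi> (e (Suc n)) * inner \<phi> (e (Suc n)))
      \<le> (lam (Suc n) * (inner \<psi> (e (Suc n)))\<^sup>2 + lam (Suc n) * (inner \<phi> (e (Suc n)))\<^sup>2) / 2"
  proof (intro exI allI impI)
    fix n :: nat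
    define a where "a = inner \<psi> (e (Suc n))"
    define b where "b = inner \<phi> (e (Suc n))"
    have "2 * \<bar>a * b\<bar> \<le> a\<^sup>2 + b\<^sup>2"
      using sum_squares_bound[of "\<bar>a\<bar>" "\<bar>b\<bar>"] by (simp add: abs_mult)
    then have "lam (Suc n) * (2 * \<bar>a * b\<bar>) \<le> lam (Suc n) * (a\<^sup>2 + b\<^sup>2)"
      using lam by (intro mult_left_mono) auto
    then show "norm (lam (Suc n) * a * b) \<le> (lam (Suc n) * a\<^sup>2 + lam (Suc n) * b\<^sup>2) / 2"
      using lam[of n] by (simp add: abs_mult algebra_simps)
  qed
qed

lemma Lform_sym: "L_form lam e \<psi> \<phi> = L_form lam e \<phi> \<psi>"
  unfolding L_form_def by (simp add: ac_simps)

lemma Lform_lin2: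
  assumes lam: "\<And>j. 0 \<le> lam (Suc j)" and psi: "\<psi> \<in> form_dom lam e"
    and u: "\<And>j. j \<in> {1..n} \<Longrightarrow> u j \<in> form_dom lam e"
  shows "L_form lam e \<psi> (\<Sum>j=1..n. c j *\<^sub>R u j) = (\<Sum>j=1..n. c j * L_form lam e \<psi> (u j))"
proof -
  have "L_form lam e \<psi> (\<Sum>j=1..n. c j *\<^sub>R u j)
      = (\<Sum>i. \<Sum>j=1..n. c j * (lam (Suc i) * inner \<psi> (e (Suc i)) * inner (u j) (e (Suc i))))"
    unfolding L_form_def
    by (simp add: inner_sum_left sum_distrib_left sum_distrib_right ac_simps)
  also have "\<dots> = (\<Sum>j=1..n. \<Sum>i. c j * (lam (Suc i) * inner \<psi> (e (Suc i)) * inner (u j) (e (Suc i))))"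
    by (intro suminf_sum summable_mult Lform_summable lam psi u) auto
  also have "\<dots> = (\<Sum>j=1..n. c j * L_form lam e \<psi> (u j))"
    unfolding L_form_def
  proof (intro sum.cong refl)
    fix j assume j: "j \<in> {1..n}"
    show "(\<Sum>i. c j * (lam (Suc i) * inner \<psi> (e (Suc i)) * inner (u j) (e (Suc i)))) = c j * (\<Sum>i. lam (Suc i) * inner \<psi> (e (Suc i)) * inner (u j) (e (Suc i)))"
      by (rule suminf_mult[OF Lform_summable[OF lam psi u[OF j]]])
  qed
  finally show ?thesis .
qed

lemma Lform_nonneg:
  assumes lam: "\<And>j. 0 \<le> lam (Suc j)" and psi: "\<psi> \<in> form_dom lam e"
  shows "0 \<le> L_form lam e \<psi> \<psi>"
  unfolding L_form_def
  by (rule suminf_nonneg[OF Lform_summable[OF lam psi psi]]) (metis lam mult.assoc mult_nonneg_nonneg zero_le_square)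

lemma aux_div: assumes "1 + E * l \<noteq> 0" shows "a / (1 + E*l) + E * (a / (1 + E*l) * l) = (a::real)"
proof -
  have "a / (1 + E*l) + E * (a / (1 + E*l) * l) = a / (1 + E*l) * (1 + E*l)"
    by (simp add: distrib_left mult.commute mult.left_commute add_divide_distrib)
  also have "\<dots> = a" using assms by simp
  finally show ?thesis .
qed

context
  fixes u :: "nat \<Rightarrow> 'a::real_inner" and n :: nat and lam :: "nat \<Rightarrow> real" and e :: "nat \<Rightarrow> 'a"
  assumes ons: "ONS u n"
    and lam: "\<And>j. 0 \<le> lam (Suc j)"
    and dom: "span (u ` {1..n}) \<subseteq> form_dom lam e"
begin

lemma u_dom: "j \<in> {1..n} \<Longrightarrow> u j \<in> form_dom lam e"
  by (meson dom imageI span_base subsetD)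

lemma dop_formula:
  assumes psi: "\<psi> \<in> span (u ` {1..n})"
  shows "discrete_op (span (u ` {1..n})) lam e \<psi> = (\<Sum>j=1..n. L_form lam e \<psi> (u j) *\<^sub>R u j)"
  unfolding discrete_op_def
proof (rule the_equality)
  let ?w = "(\<Sum>j=1..n. L_form lam e \<psi> (u j) *\<^sub>R u j)"
  have psid: "\<psi> \<in> form_dom lam e" using psi dom by auto
  show "?w \<in> span (u ` {1..n}) \<and> (\<forall>\<phi>\<in>span (u ` {1..n}). inner ?w \<phi> = L_form lam e \<psi> \<phi>)"
  proof (intro conjI ballI ons_sum_in_span)
    fix \<phi> assume phi: "\<phi> \<in> span (u ` {1..n})"
    have "L_form lam e \<psi> \<phi> = L_form lam e \<psi> (\<Sum>j=1..n. inner \<phi> (u j) *\<^sub>R u j)"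
      using ons_span_repr[OF ons phi] by simp
    also have "\<dots> = (\<Sum>j=1..n. inner \<phi> (u j) * L_form lam e \<psi> (u j))"
      by (rule Lform_lin2[OF lam psid u_dom])
    also have "\<dots> = inner ?w \<phi>"
      by (simp add: inner_sum_left inner_sum_right inner_commute mult.commute)
    finally show "inner ?w \<phi> = L_form lam e \<psi> \<phi>" ..
  qed
  fix w assume w: "w \<in> span (u ` {1..n}) \<and> (\<forall>\<phi>\<in>span (u ` {1..n}). inner w \<phi> = L_form lam e \<psi> \<phi>)"
  show "w = ?w"
  proof (rule ons_coeff_eq[OF ons])
    show "w \<in> span (u ` {1..n})" using w by blast
    fix j assume j: "j \<in> {1..n}"
    then have "u j \<in> span (u ` {1..n})" by (intro span_base imageI)
    then show "inner w (u j) = L_form lam e \<psi> (u j)" using w by blast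
  qed
qed

context
  fixes lamh :: "nat \<Rightarrow> real"
  assumes eig: "\<And>j. j \<in> {1..n} \<Longrightarrow> discrete_op (span (u ` {1..n})) lam e (u j) = lamh j *\<^sub>R u j"
begin

lemma Lform_uu: "i \<in> {1..n} \<Longrightarrow> j \<in> {1..n} \<Longrightarrow> L_form lam e (u i) (u j) = (if i = j then lamh i else 0)"
proof -
  assume i: "i \<in> {1..n}" and j: "j \<in> {1..n}"
  have "u i \<in> span (u ` {1..n})" using i by (intro span_base) auto
  then have "(\<Sum>j=1..n. L_form lam e (u i) (u j) *\<^sub>R u j) = lamh i *\<^sub>R u i"
    using dop_formula eig[OF i] by simp
  then have "inner (\<Sum>j=1..n. L_form lam e (u i) (u j) *\<^sub>R u j) (u j) = inner (lamh i *\<^sub>R u i) (u j)"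
    by simp
  then show ?thesis using ons_inner_sum[OF ons j] ons i j unfolding ONS_def by auto
qed

lemma lamh_nonneg: "j \<in> {1..n} \<Longrightarrow> 0 \<le> lamh j"
  using Lform_uu[of j j] Lform_nonneg[OF lam u_dom, of j] by auto

lemma dop_sum: "discrete_op (span (u ` {1..n})) lam e (\<Sum>j=1..n. c j *\<^sub>R u j) = (\<Sum>j=1..n. (c j * lamh j) *\<^sub>R u j)"
proof -
  have "discrete_op (span (u ` {1..n})) lam e (\<Sum>j=1..n. c j *\<^sub>R u j)
      = (\<Sum>j=1..n. L_form lam e (\<Sum>i=1..n. c i *\<^sub>R u i) (u j) *\<^sub>R u j)"
    by (rule dop_formula[OF ons_sum_in_span])
  also have "\<dots> = (\<Sum>j=1..n. (c j * lamh j) *\<^sub>R u j)"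
  proof (intro sum.cong refl)
    fix j assume j: "j \<in> {1..n}"
    have "L_form lam e (\<Sum>i=1..n. c i *\<^sub>R u i) (u j) = (\<Sum>i=1..n. c i * L_form lam e (u j) (u i))"
      by (subst Lform_sym, rule Lform_lin2[OF lam u_dom[OF j] u_dom])
    also have "\<dots> = (\<Sum>i=1..n. c i * (if i = j then lamh j else 0))"
      using j by (intro sum.cong refl) (auto simp: Lform_uu)
    also have "\<dots> = c j * lamh j" using j by (simp add: if_distrib sum.delta cong: if_cong)
    finally show "L_form lam e (\<Sum>i=1..n. c i *\<^sub>R u i) (u j) *\<^sub>R u j = (c j * lamh j) *\<^sub>R u j" by simp
  qed
  finally show ?thesis .
qed

lemma resolv_formula:
  assumes v: "v \<in> span (u ` {1..n})"
  shows "resolv (span (u ` {1..n})) (discrete_op (span (u ` {1..n})) lam e) y v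
       = (\<Sum>j=1..n. (inner v (u j) / (1 + exp (2 * y) * lamh j)) *\<^sub>R u j)"
  unfolding resolv_def
proof (rule the_equality)
  let ?V = "span (u ` {1..n})"
  let ?A = "discrete_op ?V lam e"
  have pos: "j \<in> {1..n} \<Longrightarrow> 0 < 1 + exp (2 * y) * lamh j" for j
    using lamh_nonneg[of j] by (smt (verit) exp_gt_zero mult_nonneg_nonneg)
  let ?u = "(\<Sum>j=1..n. (inner v (u j) / (1 + exp (2 * y) * lamh j)) *\<^sub>R u j)"
  show "?u \<in> ?V \<and> ?u + exp (2 * y) *\<^sub>R ?A ?u = v"
  proof (intro conjI ons_sum_in_span)
    have "?u + exp (2 * y) *\<^sub>R ?A ?u
       = (\<Sum>j=1..n. (inner v (u j) / (1 + exp (2 * y) * lamh j) + exp (2 * y) * (inner v (u j) / (1 + exp (2 * y) * lamh j) * lamh j)) *\<^sub>R u j)"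
      unfolding dop_sum[of "\<lambda>j. inner v (u j) / (1 + exp (2 * y) * lamh j)"]
      by (simp add: scaleR_sum_right scaleR_add_left sum.distrib)
    also have "\<dots> = (\<Sum>j=1..n. inner v (u j) *\<^sub>R u j)"
    proof (intro sum.cong refl)
      fix j assume "j \<in> {1..n}"
      with pos[of j] show "(inner v (u j) / (1 + exp (2 * y) * lamh j) + exp (2 * y) * (inner v (u j) / (1 + exp (2 * y) * lamh j) * lamh j)) *\<^sub>R u j = inner v (u j) *\<^sub>R u j"
        by (subst aux_div) auto
    qed
    also have "\<dots> = v" using ons_span_repr[OF ons v] by simp
    finally show "?u + exp (2 * y) *\<^sub>R ?A ?u = v" .
  qed
  fix w assume w: "w \<in> ?V \<and> w + exp (2 * y) *\<^sub>R ?A w = v"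
  define W0 where "W0 = (\<Sum>j=1..n. inner w (u j) *\<^sub>R u j)"
  have wr: "w = W0" unfolding W0_def using ons_span_repr[OF ons] w by blast
  have "v = W0 + exp (2 * y) *\<^sub>R ?A W0" using w wr by simp
  also have "\<dots> = (\<Sum>j=1..n. (inner w (u j) + exp (2 * y) * (inner w (u j) * lamh j)) *\<^sub>R u j)"
    unfolding W0_def dop_sum[of "\<lambda>j. inner w (u j)"]
    by (simp add: scaleR_sum_right scaleR_add_left sum.distrib)
  finally have vv: "v = \<dots>" .
  have vi: "\<And>i. i \<in> {1..n} \<Longrightarrow> inner v (u i) = inner w (u i) * (1 + exp (2 * y) * lamh i)"
  proof -
    fix i assume i: "i \<in> {1..n}"
    have "inner v (u i) = inner w (u i) + exp (2 * y) * (inner w (u i) * lamh i)"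
      by (subst vv, rule ons_inner_sum[OF ons i])
    then show "inner v (u i) = inner w (u i) * (1 + exp (2 * y) * lamh i)" by (simp add: algebra_simps)
  qed
  show "w = ?u"
  proof (rule ons_coeff_eq[OF ons])
    show "w \<in> ?V" using w by blast
    fix j assume j: "j \<in> {1..n}"
    show "inner w (u j) = inner v (u j) / (1 + exp (2 * y) * lamh j)"
      unfolding vi[OF j] using pos[OF j] by simp
  qed
qed

end
end


definition qf :: "real \<Rightarrow> real \<Rightarrow> real \<Rightarrow> real" where
  "qf \<beta> k x = (2 * k * sin (pi * \<beta>) / pi) *
     (\<Sum>l\<in>{- \<lceil>pi\<^sup>2 / (4 * \<beta> * k\<^sup>2)\<rceil> .. \<lceil>pi\<^sup>2 / (4 * (1 - \<beta>) * k\<^sup>2)\<rceil>}.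
        exp (2 * \<beta> * (of_int l * k)) / (1 + exp (2 * (of_int l * k)) * x))"

lemma orth_proj_formula:
  assumes ons: "ONS u n"
  shows "orth_proj (span (u ` {1..n})) g = (\<Sum>j=1..n. inner g (u j) *\<^sub>R u j)"
  unfolding orth_proj_def
proof (rule the_equality)
  let ?y = "(\<Sum>j=1..n. inner g (u j) *\<^sub>R u j)"
  show "?y \<in> span (u ` {1..n}) \<and> (\<forall>z\<in>span (u ` {1..n}). inner (g - ?y) z = 0)"
  proof (intro conjI ballI ons_sum_in_span)
    fix z assume z: "z \<in> span (u ` {1..n})"
    have "inner (g - ?y) z = inner (g - ?y) (\<Sum>j=1..n. inner z (u j) *\<^sub>R u j)"
      using ons_span_repr[OF ons z] by simp
    also have "\<dots> = (\<Sum>j=1..n. inner z (u j) * (inner g (u j) - inner ?y (u j)))"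
      by (simp add: inner_sum_right inner_diff_left)
    also have "\<dots> = 0"
      using ons_inner_sum[OF ons] by (intro sum.neutral) simp
    finally show "inner (g - ?y) z = 0" .
  qed
  fix y assume y: "y \<in> span (u ` {1..n}) \<and> (\<forall>z\<in>span (u ` {1..n}). inner (g - y) z = 0)"
  show "y = ?y"
  proof (rule ons_coeff_eq[OF ons])
    show "y \<in> span (u ` {1..n})" using y by blast
    fix j assume j: "j \<in> {1..n}"
    then have "u j \<in> span (u ` {1..n})" by (intro span_base imageI)
    then have "inner (g - y) (u j) = 0" using y by blast
    then show "inner y (u j) = inner g (u j)" by (simp add: inner_diff_left)
  qed
qed

lemma Qop_formula:
  assumes ons: "ONS u n" and lam: "\<And>j. 0 \<le> lam (Suc j)"
    and dom: "span (u ` {1..n}) \<subseteq> form_dom lam e"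
    and eig: "\<And>j. j \<in> {1..n} \<Longrightarrow> discrete_op (span (u ` {1..n})) lam e (u j) = lamh j *\<^sub>R u j"
    and v: "v \<in> span (u ` {1..n})"
  shows "Qop \<beta> k (span (u ` {1..n})) (discrete_op (span (u ` {1..n})) lam e) v
       = (\<Sum>j=1..n. (qf \<beta> k (lamh j) * inner v (u j)) *\<^sub>R u j)"
proof -
  let ?L = "{- \<lceil>pi\<^sup>2 / (4 * \<beta> * k\<^sup>2)\<rceil> .. \<lceil>pi\<^sup>2 / (4 * (1 - \<beta>) * k\<^sup>2)\<rceil>}"
  let ?c = "2 * k * sin (pi * \<beta>) / pi"
  have "Qop \<beta> k (span (u ` {1..n})) (discrete_op (span (u ` {1..n})) lam e) v
      = ?c *\<^sub>R (\<Sum>l\<in>?L. exp (2 * \<beta> * (of_int l * k)) *\<^sub>R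
           (\<Sum>j=1..n. (inner v (u j) / (1 + exp (2 * (of_int l * k)) * lamh j)) *\<^sub>R u j))"
    unfolding Qop_def using resolv_formula[OF ons lam dom eig v] by simp
  also have "\<dots> = (\<Sum>j=1..n. (?c * (\<Sum>l\<in>?L. exp (2 * \<beta> * (of_int l * k)) * (inner v (u j) / (1 + exp (2 * (of_int l * k)) * lamh j)))) *\<^sub>R u j)"
    by (simp add: scaleR_sum_right scaleR_sum_left sum_distrib_left, rule sum.swap)
  also have "\<dots> = (\<Sum>j=1..n. (qf \<beta> k (lamh j) * inner v (u j)) *\<^sub>R u j)"
    unfolding qf_def by (intro sum.cong refl arg_cong[where f="\<lambda>x. x *\<^sub>R _"])
       (simp add: sum_distrib_left sum_distrib_right mult.assoc)
  finally show ?thesis .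
qed

lemma Y_tilde_norm:
  assumes ons: "ONS u n" and lam: "\<And>j. 0 \<le> lam (Suc j)"
    and dom: "span (u ` {1..n}) \<subseteq> form_dom lam e"
    and eig: "\<And>j. j \<in> {1..n} \<Longrightarrow> discrete_op (span (u ` {1..n})) lam e (u j) = lamh j *\<^sub>R u j"
  shows "norm (Y_tilde \<beta> lam e (span (u ` {1..n})) n u k B g t \<omega>)
     = sqrt (\<Sum>j=1..n. (qf \<beta> k (lamh j) * (inner g (u j) + lam j powr \<beta> * inner (W_beta \<beta> lam e B t \<omega>) (e j)))\<^sup>2)"
proof -
  let ?V = "span (u ` {1..n})"
  let ?W = "W_beta \<beta> lam e B t \<omega>"
  have P: "P_op \<beta> lam e n u ?W = (\<Sum>j=1..n. (lam j powr \<beta> * inner ?W (e j)) *\<^sub>R u j)"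
    unfolding P_op_def ..
  have "Y_tilde \<beta> lam e ?V n u k B g t \<omega>
     = (\<Sum>j=1..n. (qf \<beta> k (lamh j) * inner (orth_proj ?V g) (u j)) *\<^sub>R u j)
       + (\<Sum>j=1..n. (qf \<beta> k (lamh j) * inner (P_op \<beta> lam e n u ?W) (u j)) *\<^sub>R u j)"
  proof -
    have m1: "orth_proj ?V g \<in> ?V" unfolding orth_proj_formula[OF ons] by (rule ons_sum_in_span)
    have m2: "P_op \<beta> lam e n u ?W \<in> ?V" unfolding P by (rule ons_sum_in_span)
    note q1 = Qop_formula[OF ons lam dom eig m1, of \<beta> k]
    note q2 = Qop_formula[OF ons lam dom eig m2, of \<beta> k]
    show ?thesis unfolding Y_tilde_def by (simp only: q1 q2 order_refl)
  qed
  also have "\<dots> = (\<Sum>j=1..n. (qf \<beta> k (lamh j) * (inner g (u j) + lam j powr \<beta> * inner ?W (e j))) *\<^sub>R u j)"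
    unfolding P orth_proj_formula[OF ons] sum.distrib[symmetric]
  proof (intro sum.cong refl)
    fix j assume j: "j \<in> {1..n}"
    show "(qf \<beta> k (lamh j) * inner (\<Sum>j = 1..n. inner g (u j) *\<^sub>R u j) (u j)) *\<^sub>R u j +
          (qf \<beta> k (lamh j) * inner (\<Sum>j = 1..n. (lam j powr \<beta> * inner ?W (e j)) *\<^sub>R u j) (u j)) *\<^sub>R u j =
          (qf \<beta> k (lamh j) * (inner g (u j) + lam j powr \<beta> * inner ?W (e j))) *\<^sub>R u j"
      unfolding ons_inner_sum[OF ons j] by (simp add: algebra_simps)
  qed
  finally have Yeq: "Y_tilde \<beta> lam e ?V n u k B g t \<omega> = (\<Sum>j=1..n. (qf \<beta> k (lamh j) * (inner g (u j) + lam j powr \<beta> * inner ?W (e j))) *\<^sub>R u j)" .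
  show ?thesis unfolding Yeq ons_norm_sum[OF ons, symmetric] by simp
qed


lemma geo_set_bound:
  fixes A :: "nat set" and r :: real
  assumes "finite A" "0 \<le> r" "r < 1"
  shows "(\<Sum>m\<in>A. r ^ m) \<le> 1 / (1 - r)"
proof -
  have "(\<Sum>m\<in>A. r ^ m) \<le> (\<Sum>m. r ^ m)"
    using assms by (intro sum_le_suminf summable_geometric) auto
  also have "\<dots> = 1 / (1 - r)" using assms by (simp add: suminf_geometric)
  finally show ?thesis .
qed

lemma int_geo_bound:
  fixes L :: "int set" and r :: real and l0 :: int
  assumes "finite L" "0 \<le> r" "r < 1"
  shows "(\<Sum>l\<in>L. r ^ nat \<bar>l - l0\<bar>) \<le> 2 / (1 - r)"
proof -
  let ?Lp = "{l\<in>L. l0 \<le> l}" and ?Lm = "{l\<in>L. l < l0}"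
  have split: "(\<Sum>l\<in>L. r ^ nat \<bar>l - l0\<bar>) = (\<Sum>l\<in>?Lp. r ^ nat \<bar>l - l0\<bar>) + (\<Sum>l\<in>?Lm. r ^ nat \<bar>l - l0\<bar>)"
    using assms(1) by (subst sum.union_disjoint[symmetric]) (auto intro!: sum.cong)
  have "(\<Sum>l\<in>?Lp. r ^ nat \<bar>l - l0\<bar>) = (\<Sum>l\<in>?Lp. r ^ nat (l - l0))"
    by (intro sum.cong) auto
  also have "\<dots> = (\<Sum>m\<in>(\<lambda>l. nat (l - l0)) ` ?Lp. r ^ m)"
    by (subst sum.reindex) (auto simp: inj_on_def)
  also have "\<dots> \<le> 1 / (1 - r)" using assms by (intro geo_set_bound) auto
  finally have 1: "(\<Sum>l\<in>?Lp. r ^ nat \<bar>l - l0\<bar>) \<le> 1 / (1 - r)" .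
  have "(\<Sum>l\<in>?Lm. r ^ nat \<bar>l - l0\<bar>) = (\<Sum>l\<in>?Lm. r ^ nat (l0 - l))"
    by (intro sum.cong) auto
  also have "\<dots> = (\<Sum>m\<in>(\<lambda>l. nat (l0 - l)) ` ?Lm. r ^ m)"
    by (subst sum.reindex) (auto simp: inj_on_def)
  also have "\<dots> \<le> 1 / (1 - r)" using assms by (intro geo_set_bound) auto
  finally have 2: "(\<Sum>l\<in>?Lm. r ^ nat \<bar>l - l0\<bar>) \<le> 1 / (1 - r)" .
  show ?thesis using split 1 2 by simp
qed

lemma ratio_exp_bound:
  fixes \<beta> z a :: real
  assumes "0 < \<beta>" "\<beta> < 1" "a = 2 * min \<beta> (1 - \<beta>)"
  shows "exp (2 * \<beta> * z) / (1 + exp (2 * z)) \<le> exp (- a * \<bar>z\<bar>)"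
proof (cases "z \<ge> 0")
  case True
  have "exp (2 * \<beta> * z) / (1 + exp (2 * z)) \<le> exp (2 * \<beta> * z) / exp (2 * z)"
    by (intro divide_left_mono) (auto intro!: mult_pos_pos add_pos_pos)
  also have "\<dots> = exp (- (2 * (1 - \<beta>)) * z)" by (simp add: exp_diff[symmetric] algebra_simps)
  also have "\<dots> \<le> exp (- a * \<bar>z\<bar>)"
  proof -
    have "min \<beta> (1 - \<beta>) * z \<le> (1 - \<beta>) * z" using True by (intro mult_right_mono) auto
    moreover have "- (2 * (1 - \<beta>)) * z = - 2 * ((1 - \<beta>) * z)" by (simp add: algebra_simps)
    moreover have "- a * \<bar>z\<bar> = - 2 * (min \<beta> (1 - \<beta>) * z)" using True assms by simp
    ultimately show ?thesis by (simp only: exp_le_cancel_iff)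
  qed
  finally show ?thesis .
next
  case False
  have "exp (2 * \<beta> * z) / (1 + exp (2 * z)) \<le> exp (2 * \<beta> * z)"
    by (simp add: divide_le_eq add_pos_pos)
  also have "\<dots> \<le> exp (- a * \<bar>z\<bar>)"
  proof -
    have "min \<beta> (1 - \<beta>) * z \<ge> \<beta> * z" using False by (intro mult_right_mono_neg) auto
    moreover have "- a * \<bar>z\<bar> = 2 * (min \<beta> (1 - \<beta>) * z)" using False assms by simp
    ultimately show ?thesis by (simp only: exp_le_cancel_iff)
  qed
  finally show ?thesis .
qed

lemma term_bound:
  fixes \<beta> x y a :: real
  assumes "0 < \<beta>" "\<beta> < 1" "a = 2 * min \<beta> (1 - \<beta>)" "0 < x"
  shows "exp (2 * \<beta> * y) / (1 + exp (2 * y) * x) \<le> x powr (- \<beta>) * exp (- a * \<bar>y + ln x / 2\<bar>)"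
proof -
  let ?z = "y + ln x / 2"
  have "2 * ?z = 2 * y + ln x" by simp
  then have e1: "exp (2 * y) * x = exp (2 * ?z)" using assms(4) by (simp only: exp_add exp_ln)
  have "2 * \<beta> * ?z = 2 * \<beta> * y + \<beta> * ln x" by (simp add: algebra_simps)
  then have "exp (2 * \<beta> * ?z) = exp (2 * \<beta> * y) * x powr \<beta>"
    using assms(4) by (simp add: exp_add powr_def)
  moreover have "x powr (- \<beta>) * x powr \<beta> = 1" using assms(4) by (simp add: powr_add[symmetric])
  ultimately have e2: "exp (2 * \<beta> * y) = x powr (- \<beta>) * exp (2 * \<beta> * ?z)"
    by (metis mult.assoc mult.commute mult_1)
  have "exp (2 * \<beta> * y) / (1 + exp (2 * y) * x) = x powr (- \<beta>) * (exp (2 * \<beta> * ?z) / (1 + exp (2 * ?z)))"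
    unfolding e1 e2 by simp
  also have "\<dots> \<le> x powr (- \<beta>) * exp (- a * \<bar>?z\<bar>)"
    by (intro mult_left_mono ratio_exp_bound assms) auto
  finally show ?thesis .
qed

lemma abs_shift_bound:
  fixes k c :: real and l :: int
  assumes "0 < k"
  shows "\<bar>of_int l * k + c\<bar> \<ge> (of_int \<bar>l - \<lfloor>- c / k\<rfloor>\<bar> - 1) * k"
proof -
  let ?l0 = "\<lfloor>- c / k\<rfloor>"
  have "of_int ?l0 \<le> -c/k" by (rule of_int_floor_le)
  then have "of_int ?l0 * k \<le> -c/k * k" using assms by (intro mult_right_mono) auto
  then have f1: "of_int ?l0 * k \<le> - c" using assms by simp
  have "-c/k < of_int ?l0 + 1" by linarith
  then have "-c/k * k < (of_int ?l0 + 1) * k" using assms by (intro mult_strict_right_mono) auto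
  then have f2: "- c < (of_int ?l0 + 1) * k" using assms by simp
  show ?thesis
  proof (cases "l \<le> ?l0")
    case True
    then have "of_int l * k \<le> of_int ?l0 * k" using assms by (intro mult_right_mono) auto
    then have "\<bar>of_int l * k + c\<bar> = (of_int ?l0 - of_int l) * k + (- c - of_int ?l0 * k)"
      using f1 by (simp add: algebra_simps)
    also have "\<dots> \<ge> (of_int ?l0 - of_int l) * k" using f1 by simp
    also have "(of_int ?l0 - of_int l) * k \<ge> (of_int \<bar>l - ?l0\<bar> - 1) * k"
      using True assms by (intro mult_right_mono) auto
    finally show ?thesis .
  next
    case False
    then have "of_int l \<ge> of_int ?l0 + (1::real)" by linarith
    then have "of_int l * k \<ge> (of_int ?l0 + 1) * k" using assms by (intro mult_right_mono) auto
    then have "\<bar>of_int l * k + c\<bar> = (of_int l - of_int ?l0 - 1) * k + ((of_int ?l0 + 1) * k + c)"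
      using f2 by (simp add: algebra_simps)
    also have "\<dots> \<ge> (of_int l - of_int ?l0 - 1) * k" using f2 by simp
    also have "(of_int l - of_int ?l0 - 1) * k = (of_int \<bar>l - ?l0\<bar> - 1) * k"
      using False by simp
    finally show ?thesis by simp
  qed
qed


definition Kq :: "real \<Rightarrow> real" where
  "Kq \<beta> = (4 / pi) * exp (2 * min \<beta> (1 - \<beta>)) * (1 + 2 * min \<beta> (1 - \<beta>)) / (2 * min \<beta> (1 - \<beta>))"

lemma k_ratio_bound:
  fixes a k :: real assumes "0 < a" "0 < k" "k \<le> 1"
  shows "0 < 1 - exp (- a * k)" "k / (1 - exp (- a * k)) \<le> (1 + a) / a"
proof -
  have "1 + a * k \<le> exp (a * k)" by (rule exp_ge_add_one_self)
  then have "exp (- a * k) \<le> 1 / (1 + a * k)"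
    using assms by (simp add: exp_minus field_simps add_pos_pos)
  moreover have "1 - 1 / (1 + a * k) = a * k / (1 + a * k)"
  proof -
    have pk: "0 < 1 + a * k" using assms by (smt (verit) mult_pos_pos)
    then have "1 = (1 + a * k) / (1 + a * k)" by simp
    also have "\<dots> = 1 / (1 + a * k) + a * k / (1 + a * k)" by (rule add_divide_distrib)
    finally show ?thesis by simp
  qed
  ultimately have ge: "1 - exp (- a * k) \<ge> a * k / (1 + a * k)" by linarith
  have pos: "a * k / (1 + a * k) > 0" using assms by (simp add: add_pos_pos)
  show "0 < 1 - exp (- a * k)" using ge pos by linarith
  have "k / (1 - exp (- a * k)) \<le> k / (a * k / (1 + a * k))"
  proof (rule divide_left_mono[OF ge])
    show "0 \<le> k" using assms by simp
    show "0 < (1 - exp (- a * k)) * (a * k / (1 + a * k))" using ge pos by (intro mult_pos_pos) linarith+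
  qed
  also have "\<dots> = (1 + a * k) / a" using assms by (simp add: field_simps)
  also have "\<dots> \<le> (1 + a) / a" using assms by (intro divide_right_mono) (auto simp: mult_left_le)
  finally show "k / (1 - exp (- a * k)) \<le> (1 + a) / a" .
qed

lemma qf_bound:
  assumes b: "0 < \<beta>" "\<beta> < 1" and k: "0 < k" "k \<le> 1" and x: "0 < x"
  shows "0 \<le> qf \<beta> k x" "qf \<beta> k x \<le> Kq \<beta> * x powr (- \<beta>)"
proof -
  define a where "a = 2 * min \<beta> (1 - \<beta>)"
  have a: "0 < a" using b by (simp add: a_def)
  define L where "L = {- \<lceil>pi\<^sup>2 / (4 * \<beta> * k\<^sup>2)\<rceil> .. \<lceil>pi\<^sup>2 / (4 * (1 - \<beta>) * k\<^sup>2)\<rceil>}"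
  define c where "c = 2 * k * sin (pi * \<beta>) / pi"
  define T where "T l = exp (2 * \<beta> * (of_int l * k)) / (1 + exp (2 * (of_int l * k)) * x)" for l :: int
  define r where "r = exp (- a * k)"
  define l0 where "l0 = \<lfloor>- (ln x / 2) / k\<rfloor>"
  have qf_eq: "qf \<beta> k x = c * (\<Sum>l\<in>L. T l)" unfolding qf_def c_def L_def T_def ..
  have sinpos: "0 \<le> sin (pi * \<beta>)" using b by (intro sin_ge_zero) auto
  have c0: "0 \<le> c" unfolding c_def using k sinpos by simp
  have c1: "c \<le> 2 * k / pi" unfolding c_def using k by (simp add: divide_right_mono)
  have T0: "0 \<le> T l" for l unfolding T_def using x by (simp add: add_pos_pos)
  show "0 \<le> qf \<beta> k x" unfolding qf_eq using c0 T0 by (simp add: sum_nonneg)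
  have r: "0 \<le> r" "r < 1" using k_ratio_bound(1)[OF a k] by (auto simp: r_def)
  have Tb: "T l \<le> x powr (- \<beta>) * exp (a * k) * r ^ nat \<bar>l - l0\<bar>" for l
  proof -
    have "T l \<le> x powr (- \<beta>) * exp (- a * \<bar>of_int l * k + ln x / 2\<bar>)"
      unfolding T_def by (rule term_bound[OF b a_def x])
    also have "exp (- a * \<bar>of_int l * k + ln x / 2\<bar>) \<le> exp (- a * ((of_int \<bar>l - l0\<bar> - 1) * k))"
      using abs_shift_bound[OF k(1), of l "ln x / 2"] a unfolding l0_def by simp
    also have "exp (- a * ((of_int \<bar>l - l0\<bar> - 1) * k)) = exp (a * k) * r ^ nat \<bar>l - l0\<bar>"
    proof -
      have "exp (- a * ((of_int \<bar>l - l0\<bar> - 1) * k)) = exp (a * k + of_nat (nat \<bar>l - l0\<bar>) * (- a * k))"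
        by (simp add: algebra_simps)
      also have "\<dots> = exp (a * k) * r ^ nat \<bar>l - l0\<bar>"
        unfolding r_def exp_add exp_of_nat_mult ..
      finally show ?thesis .
    qed
    finally show ?thesis using x by simp
  qed
  have "(\<Sum>l\<in>L. T l) \<le> (\<Sum>l\<in>L. x powr (- \<beta>) * exp (a * k) * r ^ nat \<bar>l - l0\<bar>)"
    by (intro sum_mono Tb)
  also have "\<dots> = x powr (- \<beta>) * exp (a * k) * (\<Sum>l\<in>L. r ^ nat \<bar>l - l0\<bar>)"
    by (simp add: sum_distrib_left)
  also have "\<dots> \<le> x powr (- \<beta>) * exp (a * k) * (2 / (1 - r))"
    by (intro mult_left_mono int_geo_bound r) (auto simp: L_def)
  finally have S: "(\<Sum>l\<in>L. T l) \<le> x powr (- \<beta>) * exp (a * k) * (2 / (1 - r))" .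
  have "qf \<beta> k x \<le> (2 * k / pi) * (x powr (- \<beta>) * exp (a * k) * (2 / (1 - r)))"
    unfolding qf_eq using c0 c1 S T0 by (intro mult_mono) (auto simp: sum_nonneg)
  also have "\<dots> = (4 / pi) * exp (a * k) * x powr (- \<beta>) * (k / (1 - r))"
    by (simp add: field_simps)
  also have "\<dots> \<le> (4 / pi) * exp a * x powr (- \<beta>) * ((1 + a) / a)"
    using k a k_ratio_bound[OF a k] unfolding r_def
    by (intro mult_mono) (auto intro!: mult_nonneg_nonneg divide_nonneg_nonneg simp: mult_le_cancel_left1)
  also have "\<dots> = Kq \<beta> * x powr (- \<beta>)" unfolding Kq_def a_def by simp
  finally show "qf \<beta> k x \<le> Kq \<beta> * x powr (- \<beta>)" .
qed


lemma jensen_w: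
  fixes w x :: "'i \<Rightarrow> real"
  assumes J: "finite J" and w: "\<And>j. j \<in> J \<Longrightarrow> 0 \<le> w j" and x: "\<And>j. j \<in> J \<Longrightarrow> 0 \<le> x j" and m: "1 \<le> m"
  shows "(\<Sum>j\<in>J. w j * x j) powr m \<le> (\<Sum>j\<in>J. w j) powr (m - 1) * (\<Sum>j\<in>J. w j * x j powr m)"
proof -
  define J' where "J' = {j\<in>J. 0 < w j \<and> 0 < x j}"
  have J'J: "J' \<subseteq> J" unfolding J'_def by auto
  have fin': "finite J'" using J J'J finite_subset by blast
  have sumJ: "(\<Sum>j\<in>J. w j * x j) = (\<Sum>j\<in>J'. w j * x j)"
  proof (rule sum.mono_neutral_right[OF J J'J])
    show "\<forall>i\<in>J - J'. w i * x i = 0" using w x unfolding J'_def by (auto simp: less_le)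
  qed
  have Snn: "0 \<le> (\<Sum>j\<in>J. w j)" using w by (simp add: sum_nonneg)
  have Rnn: "0 \<le> (\<Sum>j\<in>J. w j) powr (m - 1) * (\<Sum>j\<in>J. w j * x j powr m)"
    using w by (intro mult_nonneg_nonneg sum_nonneg) auto
  show ?thesis
  proof (cases "J' = {}")
    case True
    then show ?thesis using sumJ Rnn by simp
  next
    case False
    define S' where "S' = (\<Sum>j\<in>J'. w j)"
    have S'pos: "0 < S'" unfolding S'_def using False fin' by (intro sum_pos) (auto simp: J'_def)
    have S'le: "S' \<le> (\<Sum>j\<in>J. w j)" unfolding S'_def using w by (intro sum_mono2[OF J J'J]) auto
    have conv: "(\<Sum>j\<in>J'. (w j / S') *\<^sub>R x j) powr m \<le> (\<Sum>j\<in>J'. (w j / S') * x j powr m)"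
    proof (rule convex_on_sum[OF fin' False powr_convex[OF m]])
      show "(\<Sum>j\<in>J'. w j / S') = 1" using S'pos by (simp add: S'_def sum_divide_distrib[symmetric])
      show "\<And>i. i \<in> J' \<Longrightarrow> 0 \<le> w i / S'" using S'pos w J'J by auto
      show "\<And>i. i \<in> J' \<Longrightarrow> x i \<in> {0<..}" unfolding J'_def by auto
    qed
    have eq1: "(\<Sum>j\<in>J'. w j * x j) = S' * (\<Sum>j\<in>J'. (w j / S') *\<^sub>R x j)"
      using S'pos by (simp add: sum_distrib_left)
    have pos2: "0 \<le> (\<Sum>j\<in>J'. (w j / S') *\<^sub>R x j)" using S'pos w x J'J by (auto intro!: sum_nonneg)
    have "(\<Sum>j\<in>J. w j * x j) powr m = S' powr m * (\<Sum>j\<in>J'. (w j / S') *\<^sub>R x j) powr m"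
      unfolding sumJ eq1 using S'pos pos2 by (simp add: powr_mult)
    also have "\<dots> \<le> S' powr m * (\<Sum>j\<in>J'. (w j / S') * x j powr m)"
      using conv by (intro mult_left_mono) auto
    also have "\<dots> = S' powr (m - 1) * (\<Sum>j\<in>J'. w j * x j powr m)"
    proof -
      have "S' powr m = S' powr (m - 1) * S'" using S'pos by (simp add: powr_diff)
      then show ?thesis using S'pos by (simp add: sum_distrib_left sum_divide_distrib)
    qed
    also have "\<dots> \<le> (\<Sum>j\<in>J. w j) powr (m - 1) * (\<Sum>j\<in>J. w j * x j powr m)"
    proof (intro mult_mono)
      show "S' powr (m - 1) \<le> (\<Sum>j\<in>J. w j) powr (m - 1)" using S'pos S'le m by (intro powr_mono2) auto
      show "(\<Sum>j\<in>J'. w j * x j powr m) \<le> (\<Sum>j\<in>J. w j * x j powr m)"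
        using w by (intro sum_mono2[OF J J'J]) auto
      show "0 \<le> (\<Sum>j\<in>J. w j) powr (m - 1)" by simp
      show "0 \<le> (\<Sum>j\<in>J'. w j * x j powr m)" using w J'J by (intro sum_nonneg) auto
    qed
    finally show ?thesis .
  qed
qed

lemma sq_powr: "n \<ge> 1 \<Longrightarrow> ((y::real)\<^sup>2) powr (real n / 2) = \<bar>y\<bar> ^ n"
proof (cases "y = 0")
  case False
  assume n: "n \<ge> 1"
  have e: "y\<^sup>2 = \<bar>y\<bar> powr (real 2)" using False by (subst powr_realpow) auto
  have "(y\<^sup>2) powr (real n / 2) = (\<bar>y\<bar> powr (real 2)) powr (real n / 2)" by (subst e) (rule refl)
  also have "\<dots> = \<bar>y\<bar> powr (real n)" by (simp only: powr_powr) simp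
  also have "\<dots> = \<bar>y\<bar> ^ n" using False by (simp add: powr_realpow)
  finally show ?thesis .
qed simp

lemma sqrt_pow_powr: "0 \<le> X \<Longrightarrow> n \<ge> 1 \<Longrightarrow> sqrt X ^ n = X powr (real n / 2)"
proof (cases "X = 0")
  case False
  assume X: "0 \<le> X"
  then have "sqrt X ^ n = (X powr (1/2)) ^ n" by (simp add: sqrt_def root_powr_inverse False)
  also have "\<dots> = (X powr (1/2)) powr (real n)" using False X by (simp add: powr_realpow)
  also have "\<dots> = X powr (real n / 2)" by (simp add: powr_powr)
  finally show ?thesis .
qed simp

lemma norm_pow_bound:
  fixes q y :: "'i \<Rightarrow> real"
  assumes J: "finite J" and n: "n \<ge> 2"
  shows "sqrt (\<Sum>j\<in>J. (q j * y j)\<^sup>2) ^ n \<le> (\<Sum>j\<in>J. (q j)\<^sup>2) powr (real n / 2 - 1) * (\<Sum>j\<in>J. (q j)\<^sup>2 * \<bar>y j\<bar> ^ n)"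
proof -
  have "sqrt (\<Sum>j\<in>J. (q j * y j)\<^sup>2) ^ n = (\<Sum>j\<in>J. (q j)\<^sup>2 * (y j)\<^sup>2) powr (real n / 2)"
    using n by (subst sqrt_pow_powr) (auto intro: sum_nonneg simp: power_mult_distrib)
  also have "\<dots> \<le> (\<Sum>j\<in>J. (q j)\<^sup>2) powr (real n / 2 - 1) * (\<Sum>j\<in>J. (q j)\<^sup>2 * ((y j)\<^sup>2) powr (real n / 2))"
    using n by (intro jensen_w J) auto
  also have "\<dots> = (\<Sum>j\<in>J. (q j)\<^sup>2) powr (real n / 2 - 1) * (\<Sum>j\<in>J. (q j)\<^sup>2 * \<bar>y j\<bar> ^ n)"
    using n by (simp add: sq_powr)
  finally show ?thesis .
qed


lemma abs_pow_le: "\<bar>x::real\<bar> ^ n \<le> 1 + x ^ (2 * n)"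
proof (cases "\<bar>x\<bar> \<le> 1")
  case True
  then have "\<bar>x\<bar> ^ n \<le> 1" by (simp add: power_le_one)
  moreover have "0 \<le> x ^ (2 * n)" by (simp add: power_mult)
  ultimately show ?thesis by linarith
next
  case False
  then have "\<bar>x\<bar> ^ n \<le> \<bar>x\<bar> ^ (2 * n)" by (intro power_increasing) auto
  also have "\<dots> = x ^ (2 * n)" by (simp add: power_mult power_even_abs)
  finally show ?thesis by simp
qed

lemma BM_moment:
  assumes BM: "std_BM M B" and t: "0 \<le> t" "t \<le> 1"
  shows "integrable M (\<lambda>\<omega>. \<bar>B t \<omega>\<bar> ^ n) \<and> (\<integral>\<omega>. \<bar>B t \<omega>\<bar> ^ n \<partial>M) \<le> 1 + fact (2 * n)"
proof -
  have ps: "prob_space M" using BM unfolding std_BM_def by blast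
  have meas: "\<And>s. 0 \<le> s \<Longrightarrow> B s \<in> borel_measurable M" using BM unfolding std_BM_def by blast
  have AE0: "AE \<omega> in M. B 0 \<omega> = 0" using BM unfolding std_BM_def by blast
  have mt[measurable]: "B t \<in> borel_measurable M" using meas t by blast
  have m0[measurable]: "B 0 \<in> borel_measurable M" using meas by simp
  interpret prob_space M by (rule ps)
  show ?thesis
  proof (cases "t = 0")
    case True
    have ae: "AE \<omega> in M. \<bar>B t \<omega>\<bar> ^ n = 0 ^ n" using AE0 unfolding True by (rule eventually_mono) simp
    have int: "integrable M (\<lambda>\<omega>. \<bar>B t \<omega>\<bar> ^ n)"
      by (subst integrable_cong_AE[OF _ _ ae]) auto
    have "(\<integral>\<omega>. \<bar>B t \<omega>\<bar> ^ n \<partial>M) = (\<integral>\<omega>. 0 ^ n \<partial>M)"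
      by (rule integral_cong_AE[OF _ _ ae]) auto
    also have "\<dots> \<le> 1" by (simp add: power_0_left)
    also have "(1::real) \<le> 1 + fact (2 * n)" by simp
    finally show ?thesis using int by simp
  next
    case False
    then have tpos: "0 < t" using t by simp
    define X where "X = (\<lambda>\<omega>. B t \<omega> - B 0 \<omega>)"
    have dist: "distributed M lborel X (\<lambda>x. ennreal (normal_density 0 (sqrt t) x))"
  proof -
      have "\<forall>s t. 0 \<le> s \<and> s < t \<longrightarrow> distributed M lborel (\<lambda>\<omega>. B t \<omega> - B s \<omega>)
              (\<lambda>x. ennreal (normal_density 0 (sqrt (t - s)) x))" using BM unfolding std_BM_def by blast
      then have "distributed M lborel (\<lambda>\<omega>. B t \<omega> - B 0 \<omega>) (\<lambda>x. ennreal (normal_density 0 (sqrt (t - 0)) x))"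
        using tpos by blast
      then show ?thesis unfolding X_def by simp
    qed
    have [measurable]: "X \<in> borel_measurable M" unfolding X_def by measurable
    have sp: "0 < sqrt t" using tpos by simp
    have ae: "AE \<omega> in M. \<bar>B t \<omega>\<bar> ^ n = \<bar>X \<omega>\<bar> ^ n" using AE0 unfolding X_def by (rule eventually_mono) simp
    have intX: "integrable M (\<lambda>\<omega>. \<bar>X \<omega>\<bar> ^ n)"
      using distributed_integrable[OF dist, of "\<lambda>x. \<bar>x\<bar> ^ n"] integrable_normal_moment_abs[OF sp, of 0 n]
      by simp
    have intX2: "integrable M (\<lambda>\<omega>. X \<omega> ^ (2 * n))"
      using distributed_integrable[OF dist, of "\<lambda>x. x ^ (2 * n)"] integrable_normal_moment[OF sp, of 0 "2 * n"]
      by simp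
    have int: "integrable M (\<lambda>\<omega>. \<bar>B t \<omega>\<bar> ^ n)"
      by (subst integrable_cong_AE[OF _ _ ae]) (auto simp: intX)
    have "(\<integral>\<omega>. \<bar>B t \<omega>\<bar> ^ n \<partial>M) = (\<integral>\<omega>. \<bar>X \<omega>\<bar> ^ n \<partial>M)"
      by (rule integral_cong_AE[OF _ _ ae]) auto
    also have "\<dots> \<le> (\<integral>\<omega>. 1 + X \<omega> ^ (2 * n) \<partial>M)"
      using intX2 by (intro integral_mono intX Bochner_Integration.integrable_add) (auto simp: abs_pow_le)
    also have "\<dots> = 1 + (\<integral>\<omega>. X \<omega> ^ (2 * n) \<partial>M)"
      using intX2 by (simp add: prob_space)
    also have "(\<integral>\<omega>. X \<omega> ^ (2 * n) \<partial>M) = (\<integral>x. normal_density 0 (sqrt t) x * x ^ (2 * n) \<partial>lborel)"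
      by (rule distributed_integral[OF dist, symmetric]) auto
    also have "\<dots> = fact (2 * n) / ((2 / (sqrt t)\<^sup>2) ^ n * fact n)"
      using integral_normal_moment_even[OF sp, of 0 n] by simp
    also have "\<dots> \<le> fact (2 * n)"
    proof -
      have "1 \<le> 2 / (sqrt t)\<^sup>2" using tpos t by simp
      then have "1 \<le> (2 / (sqrt t)\<^sup>2) ^ n" by (rule one_le_power)
      moreover have "(1::real) \<le> fact n" by simp
      ultimately have "1 \<le> (2 / (sqrt t)\<^sup>2) ^ n * fact n" by (metis mult_mono' mult_1 zero_le_one)
      then show ?thesis by (simp add: divide_le_eq mult_le_cancel_left1)
    qed
    finally show ?thesis using int by simp
  qed
qed


lemma suminf_nonsummable: "\<not> summable f \<Longrightarrow> suminf f = (THE s. False)"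
proof -
  assume "\<not> summable f"
  then have "(\<lambda>s. f sums s) = (\<lambda>s. False)" by (auto simp: summable_def)
  then show ?thesis unfolding suminf_def by simp
qed

context
  fixes e :: "nat \<Rightarrow> 'a::{real_inner, complete_space}"
  assumes eon: "\<forall>i\<ge>1. \<forall>j\<ge>1. inner (e i) (e j) = (if i = j then 1 else 0)"
begin

lemma ser_inner: "inner (\<Sum>i\<in>I. c i *\<^sub>R e (Suc i)) (e (Suc j)) = (if finite I \<and> j \<in> I then c j else 0)"
proof (cases "finite I")
  case True
  have "inner (\<Sum>i\<in>I. c i *\<^sub>R e (Suc i)) (e (Suc j)) = (\<Sum>i\<in>I. c i * (if i = j then 1 else 0))"
    using eon by (auto simp: inner_sum_left intro!: sum.cong)
  also have "\<dots> = (if j \<in> I then c j else 0)" using True by (simp add: if_distrib sum.delta cong: if_cong)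
  finally show ?thesis using True by simp
qed simp

lemma ser_norm: "finite I \<Longrightarrow> (norm (\<Sum>i\<in>I. c i *\<^sub>R e (Suc i)))\<^sup>2 = (\<Sum>i\<in>I. (c i)\<^sup>2)"
proof -
  assume I: "finite I"
  have "(norm (\<Sum>i\<in>I. c i *\<^sub>R e (Suc i)))\<^sup>2 = inner (\<Sum>i\<in>I. c i *\<^sub>R e (Suc i)) (\<Sum>i\<in>I. c i *\<^sub>R e (Suc i))"
    by (simp add: power2_norm_eq_inner)
  also have "\<dots> = (\<Sum>j\<in>I. c j * inner (\<Sum>i\<in>I. c i *\<^sub>R e (Suc i)) (e (Suc j)))"
    by (simp add: inner_sum_right)
  also have "\<dots> = (\<Sum>i\<in>I. (c i)\<^sup>2)"
    using I by (intro sum.cong refl) (simp add: ser_inner power2_eq_square)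
  finally show ?thesis .
qed

lemma ser_diff_ge: "n \<le> m \<Longrightarrow> norm ((\<Sum>i<m. c i *\<^sub>R e (Suc i)) - (\<Sum>i<n. c i *\<^sub>R e (Suc i)))
    = sqrt (norm ((\<Sum>i<m. (c i)\<^sup>2) - (\<Sum>i<n. (c i)\<^sup>2)))"
proof -
  assume nm: "n \<le> m"
  have d1: "(\<Sum>i<m. c i *\<^sub>R e (Suc i)) - (\<Sum>i<n. c i *\<^sub>R e (Suc i)) = (\<Sum>i\<in>{n..<m}. c i *\<^sub>R e (Suc i))"
    using nm by (simp add: lessThan_atLeast0 sum_diff_nat_ivl)
  have d2: "(\<Sum>i<m. (c i)\<^sup>2) - (\<Sum>i<n. (c i)\<^sup>2) = (\<Sum>i\<in>{n..<m}. (c i)\<^sup>2)"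
    using nm by (simp add: lessThan_atLeast0 sum_diff_nat_ivl)
  have "(norm (\<Sum>i\<in>{n..<m}. c i *\<^sub>R e (Suc i)))\<^sup>2 = (\<Sum>i\<in>{n..<m}. (c i)\<^sup>2)"
    by (rule ser_norm) simp
  then have "sqrt ((norm (\<Sum>i\<in>{n..<m}. c i *\<^sub>R e (Suc i)))\<^sup>2) = sqrt (norm (\<Sum>i\<in>{n..<m}. (c i)\<^sup>2))"
    by (simp add: sum_nonneg)
  then show ?thesis unfolding d1 d2 by simp
qed

lemma ser_diff: "norm ((\<Sum>i<m. c i *\<^sub>R e (Suc i)) - (\<Sum>i<n. c i *\<^sub>R e (Suc i)))
    = sqrt (norm ((\<Sum>i<m. (c i)\<^sup>2) - (\<Sum>i<n. (c i)\<^sup>2)))"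
proof (cases "n \<le> m")
  case True then show ?thesis by (rule ser_diff_ge)
next
  case False
  then have "norm ((\<Sum>i<n. c i *\<^sub>R e (Suc i)) - (\<Sum>i<m. c i *\<^sub>R e (Suc i)))
    = sqrt (norm ((\<Sum>i<n. (c i)\<^sup>2) - (\<Sum>i<m. (c i)\<^sup>2)))" by (intro ser_diff_ge) simp
  then show ?thesis by (simp add: norm_minus_commute)
qed

lemma ser_summable_iff: "summable (\<lambda>i. c i *\<^sub>R e (Suc i)) \<longleftrightarrow> summable (\<lambda>i. (c i)\<^sup>2)"
proof -
  define Pv where "Pv = (\<lambda>n. \<Sum>i<n. c i *\<^sub>R e (Suc i))"
  define Pr where "Pr = (\<lambda>n. \<Sum>i<n. (c i)\<^sup>2)"
  have key: "norm (Pv m - Pv n) = sqrt (norm (Pr m - Pr n))" for m n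
    unfolding Pv_def Pr_def by (rule ser_diff)
  have "(\<forall>\<epsilon>>0. \<exists>M. \<forall>m\<ge>M. \<forall>n\<ge>M. sqrt (norm (Pr m - Pr n)) < \<epsilon>)
      \<longleftrightarrow> (\<forall>\<epsilon>>0. \<exists>M. \<forall>m\<ge>M. \<forall>n\<ge>M. norm (Pr m - Pr n) < \<epsilon>)"
  proof
    assume H: "\<forall>\<epsilon>>0. \<exists>M. \<forall>m\<ge>M. \<forall>n\<ge>M. sqrt (norm (Pr m - Pr n)) < \<epsilon>"
    show "\<forall>\<epsilon>>0. \<exists>M. \<forall>m\<ge>M. \<forall>n\<ge>M. norm (Pr m - Pr n) < \<epsilon>"
    proof (intro allI impI)
      fix \<epsilon> :: real assume "0 < \<epsilon>"
      then have "\<exists>M. \<forall>m\<ge>M. \<forall>n\<ge>M. sqrt (norm (Pr m - Pr n)) < sqrt \<epsilon>" using H[rule_format, of "sqrt \<epsilon>"] by simp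
      then show "\<exists>M. \<forall>m\<ge>M. \<forall>n\<ge>M. norm (Pr m - Pr n) < \<epsilon>" by simp
    qed
  next
    assume H: "\<forall>\<epsilon>>0. \<exists>M. \<forall>m\<ge>M. \<forall>n\<ge>M. norm (Pr m - Pr n) < \<epsilon>"
    show "\<forall>\<epsilon>>0. \<exists>M. \<forall>m\<ge>M. \<forall>n\<ge>M. sqrt (norm (Pr m - Pr n)) < \<epsilon>"
    proof (intro allI impI)
      fix \<epsilon> :: real assume ep: "0 < \<epsilon>"
      then obtain M where N: "\<forall>m\<ge>M. \<forall>n\<ge>M. norm (Pr m - Pr n) < \<epsilon>\<^sup>2" using H[rule_format, of "\<epsilon>\<^sup>2"] by auto
      have "sqrt (norm (Pr m - Pr n)) < \<epsilon>" if "m \<ge> M" "n \<ge> M" for m n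
        using N that ep real_sqrt_less_mono[of "norm (Pr m - Pr n)" "\<epsilon>\<^sup>2"] by auto
      then show "\<exists>M. \<forall>m\<ge>M. \<forall>n\<ge>M. sqrt (norm (Pr m - Pr n)) < \<epsilon>" by blast
    qed
  qed
  then have "Cauchy Pv \<longleftrightarrow> Cauchy Pr" unfolding Cauchy_iff key .
  then show ?thesis unfolding summable_iff_convergent Cauchy_convergent_iff[symmetric] Pv_def Pr_def .
qed

lemma ser_coeff:
  assumes "summable (\<lambda>i. c i *\<^sub>R e (Suc i))"
  shows "inner (\<Sum>i. c i *\<^sub>R e (Suc i)) (e (Suc j)) = c j"
proof -
  have "(\<lambda>i. inner (c i *\<^sub>R e (Suc i)) (e (Suc j))) sums inner (\<Sum>i. c i *\<^sub>R e (Suc i)) (e (Suc j))"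
    by (rule bounded_linear.sums[OF bounded_linear_inner_left summable_sums[OF assms]])
  moreover have "(\<lambda>i. inner (c i *\<^sub>R e (Suc i)) (e (Suc j))) = (\<lambda>i. if i = j then c i else 0)"
  proof
    fix i show "inner (c i *\<^sub>R e (Suc i)) (e (Suc j)) = (if i = j then c i else 0)"
      using eon[rule_format, of "Suc i" "Suc j"] by simp
  qed
  ultimately have "(\<lambda>i. if i = j then c i else 0) sums inner (\<Sum>i. c i *\<^sub>R e (Suc i)) (e (Suc j))" by simp
  from sums_unique2[OF this sums_single[of j c]] show ?thesis by simp
qed

end


lemma phi_props:
  fixes e :: "nat \<Rightarrow> 'a::{real_inner, complete_space}" and B :: "nat \<Rightarrow> real \<Rightarrow> 'w \<Rightarrow> real"
  assumes eon: "\<forall>i\<ge>1. \<forall>j\<ge>1. inner (e i) (e j) = (if i = j then 1 else 0)"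
    and lam_pos: "\<forall>j\<ge>1. 0 < lam j"
    and BMj: "\<forall>j\<ge>1. std_BM M (B j)"
    and ps: "prob_space M"
    and t: "0 \<le> t" "t \<le> 1"
    and summ: "summable (\<lambda>i. lam (Suc i) powr (- 2 * \<beta>))"
    and j: "1 \<le> j"
  shows "(\<lambda>\<omega>. lam j powr \<beta> * inner (W_beta \<beta> lam e B t \<omega>) (e j)) \<in> borel_measurable M"
    "AE \<omega> in M. lam j powr \<beta> * inner (W_beta \<beta> lam e B t \<omega>) (e j) = B j t \<omega>"
proof -
  interpret prob_space M by (rule ps)
  define cW where "cW \<omega> i = lam (Suc i) powr (- \<beta>) * B (Suc i) t \<omega>" for \<omega> i
  have measB[measurable]: "B (Suc i) t \<in> borel_measurable M" for i
    using BMj t unfolding std_BM_def by auto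
  have measBj[measurable]: "B j t \<in> borel_measurable M"
    using BMj t j unfolding std_BM_def by auto
  have measc[measurable]: "(\<lambda>\<omega>. cW \<omega> i) \<in> borel_measurable M" for i unfolding cW_def by measurable
  obtain j' where j': "j = Suc j'" using j by (cases j) auto
  define K0 where "K0 = lam j powr \<beta> * inner (THE s::'a. False) (e j)"
  have Wd: "W_beta \<beta> lam e B t \<omega> = (\<Sum>i. cW \<omega> i *\<^sub>R e (Suc i))" for \<omega>
    unfolding W_beta_def cW_def ..
  have phi_eq: "lam j powr \<beta> * inner (W_beta \<beta> lam e B t \<omega>) (e j)
      = (if summable (\<lambda>i. (cW \<omega> i)\<^sup>2) then B j t \<omega> else K0)" for \<omega>
  proof (cases "summable (\<lambda>i. (cW \<omega> i)\<^sup>2)")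
    case True
    then have sv: "summable (\<lambda>i. cW \<omega> i *\<^sub>R e (Suc i))" using ser_summable_iff[OF eon] by blast
    have "inner (W_beta \<beta> lam e B t \<omega>) (e j) = cW \<omega> j'"
      unfolding Wd j' by (rule ser_coeff[OF eon sv])
    moreover have "lam j powr \<beta> * (lam j powr (- \<beta>)) = 1"
    proof -
      have "0 < lam j" using lam_pos j by auto
      then show ?thesis by (simp add: powr_add[symmetric])
    qed
    ultimately show ?thesis using True unfolding cW_def j'
      by (simp add: mult.assoc[symmetric])
  next
    case False
    then have sv: "\<not> summable (\<lambda>i. cW \<omega> i *\<^sub>R e (Suc i))" using ser_summable_iff[OF eon] by blast
    show ?thesis using False unfolding Wd K0_def suminf_nonsummable[OF sv] by simp
  qed
  have summ_iff: "summable (\<lambda>i. (cW \<omega> i)\<^sup>2) \<longleftrightarrow> (\<exists>b::nat. \<forall>n. (\<Sum>i<n. (cW \<omega> i)\<^sup>2) \<le> real b)" for \<omega>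
  proof
    assume s: "summable (\<lambda>i. (cW \<omega> i)\<^sup>2)"
    show "\<exists>b::nat. \<forall>n. (\<Sum>i<n. (cW \<omega> i)\<^sup>2) \<le> real b"
    proof (intro exI allI)
      fix n
      have "(\<Sum>i<n. (cW \<omega> i)\<^sup>2) \<le> (\<Sum>i. (cW \<omega> i)\<^sup>2)" using s by (intro sum_le_suminf) auto
      also have "\<dots> \<le> real (nat \<lceil>\<Sum>i. (cW \<omega> i)\<^sup>2\<rceil>)" by (rule real_nat_ceiling_ge)
      finally show "(\<Sum>i<n. (cW \<omega> i)\<^sup>2) \<le> real (nat \<lceil>\<Sum>i. (cW \<omega> i)\<^sup>2\<rceil>)" .
    qed
  next
    assume "\<exists>b::nat. \<forall>n. (\<Sum>i<n. (cW \<omega> i)\<^sup>2) \<le> real b"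
    then obtain b :: nat where "\<forall>n. (\<Sum>i<n. (cW \<omega> i)\<^sup>2) \<le> real b" by blast
    then show "summable (\<lambda>i. (cW \<omega> i)\<^sup>2)" by (intro summableI_nonneg_bounded) auto
  qed
  have phi_eq2: "(\<lambda>\<omega>. lam j powr \<beta> * inner (W_beta \<beta> lam e B t \<omega>) (e j))
      = (\<lambda>\<omega>. if (\<exists>b::nat. \<forall>n. (\<Sum>i<n. (cW \<omega> i)\<^sup>2) \<le> real b) then B j t \<omega> else K0)"
    unfolding phi_eq summ_iff ..
  show "(\<lambda>\<omega>. lam j powr \<beta> * inner (W_beta \<beta> lam e B t \<omega>) (e j)) \<in> borel_measurable M"
    unfolding phi_eq2 by measurable
  have mom: "integrable M (\<lambda>\<omega>. \<bar>B (Suc i) t \<omega>\<bar> ^ 2) \<and> (\<integral>\<omega>. \<bar>B (Suc i) t \<omega>\<bar> ^ 2 \<partial>M) \<le> 1 + fact (2 * 2)" for i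
    using BMj t by (intro BM_moment) auto
  have sq: "(cW \<omega> i)\<^sup>2 = lam (Suc i) powr (- 2 * \<beta>) * \<bar>B (Suc i) t \<omega>\<bar> ^ 2" for \<omega> i
  proof -
    have "(lam (Suc i) powr (- \<beta>))\<^sup>2 = lam (Suc i) powr (- 2 * \<beta>)"
    proof -
      have "0 < lam (Suc i)" using lam_pos by auto
      then show ?thesis by (simp add: power2_eq_square powr_add[symmetric])
    qed
    then show ?thesis unfolding cW_def by (simp add: power_mult_distrib)
  qed
  have nn_i: "(\<integral>\<^sup>+\<omega>. ennreal ((cW \<omega> i)\<^sup>2) \<partial>M) \<le> ennreal (lam (Suc i) powr (- 2 * \<beta>) * 25)" for i
  proof -
    have int: "integrable M (\<lambda>\<omega>. (cW \<omega> i)\<^sup>2)"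
      unfolding sq using mom[of i] by simp
    have "(\<integral>\<^sup>+\<omega>. ennreal ((cW \<omega> i)\<^sup>2) \<partial>M) = ennreal (\<integral>\<omega>. (cW \<omega> i)\<^sup>2 \<partial>M)"
      by (rule nn_integral_eq_integral[OF int]) auto
    also have "(\<integral>\<omega>. (cW \<omega> i)\<^sup>2 \<partial>M) = lam (Suc i) powr (- 2 * \<beta>) * (\<integral>\<omega>. \<bar>B (Suc i) t \<omega>\<bar> ^ 2 \<partial>M)"
      unfolding sq by simp
    also have "\<dots> \<le> lam (Suc i) powr (- 2 * \<beta>) * 25"
      using mom[of i] by (intro mult_left_mono) (auto simp: eval_nat_numeral)
    finally show ?thesis by (simp add: ennreal_leI)
  qed
  have "(\<integral>\<^sup>+\<omega>. (\<Sum>i. ennreal ((cW \<omega> i)\<^sup>2)) \<partial>M) = (\<Sum>i. \<integral>\<^sup>+\<omega>. ennreal ((cW \<omega> i)\<^sup>2) \<partial>M)"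
    by (rule nn_integral_suminf) measurable
  also have "\<dots> \<le> (\<Sum>i. ennreal (lam (Suc i) powr (- 2 * \<beta>) * 25))"
    by (intro suminf_le nn_i summableI)
  also have "\<dots> = ennreal (\<Sum>i. lam (Suc i) powr (- 2 * \<beta>) * 25)"
    using summ by (intro suminf_ennreal2 summable_mult2) auto
  finally have fin: "(\<integral>\<^sup>+\<omega>. (\<Sum>i. ennreal ((cW \<omega> i)\<^sup>2)) \<partial>M) \<noteq> \<infinity>"
    by (auto simp: top_unique)
  have "AE \<omega> in M. (\<Sum>i. ennreal ((cW \<omega> i)\<^sup>2)) \<noteq> \<infinity>"
    by (rule nn_integral_PInf_AE[OF _ fin]) measurable
  then have AEs: "AE \<omega> in M. summable (\<lambda>i. (cW \<omega> i)\<^sup>2)"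
    by (rule eventually_mono) (rule summable_suminf_not_top, auto)
  show "AE \<omega> in M. lam j powr \<beta> * inner (W_beta \<beta> lam e B t \<omega>) (e j) = B j t \<omega>"
    using AEs by (rule eventually_mono) (simp add: phi_eq)
qed


lemma abs_add_pow_le: "\<bar>a + x\<bar> ^ m \<le> 2 ^ m * (\<bar>a\<bar> ^ m + \<bar>x\<bar> ^ m)" for a x :: real
proof -
  have "\<bar>a + x\<bar> \<le> 2 * max \<bar>a\<bar> \<bar>x\<bar>" by simp
  then have "\<bar>a + x\<bar> ^ m \<le> (2 * max \<bar>a\<bar> \<bar>x\<bar>) ^ m" by (intro power_mono) auto
  also have "\<dots> = 2 ^ m * (max \<bar>a\<bar> \<bar>x\<bar>) ^ m" by (simp add: power_mult_distrib)
  also have "(max \<bar>a\<bar> \<bar>x\<bar>) ^ m \<le> \<bar>a\<bar> ^ m + \<bar>x\<bar> ^ m" by (cases "\<bar>a\<bar> \<le> \<bar>x\<bar>") (auto simp: max_def)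
  finally show ?thesis by simp
qed

lemma pow_le_aux: "0 \<le> (x::real) \<Longrightarrow> x ^ p \<le> 1 + x ^ (2 * p + 2)"
proof (cases "x \<le> 1")
  case True
  assume "0 \<le> x" then show ?thesis using True by (smt (verit) power_le_one zero_le_power)
next
  case False
  then have "x ^ p \<le> x ^ (2 * p + 2)" by (intro power_increasing) auto
  then show ?thesis by simp
qed

lemma shift_moment:
  assumes BM: "std_BM M B" and t: "0 \<le> t" "t \<le> 1"
    and fm: "f \<in> borel_measurable M" and ae: "AE \<omega> in M. f \<omega> = B t \<omega>"
  shows "integrable M (\<lambda>\<omega>. \<bar>a + f \<omega>\<bar> ^ m) \<and> (\<integral>\<omega>. \<bar>a + f \<omega>\<bar> ^ m \<partial>M) \<le> 2 ^ m * (\<bar>a\<bar> ^ m + (1 + fact (2 * m)))"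
proof -
  have ps: "prob_space M" using BM unfolding std_BM_def by blast
  interpret prob_space M by (rule ps)
  have mB[measurable]: "B t \<in> borel_measurable M" using BM t unfolding std_BM_def by blast
  note fm[measurable]
  have mom: "integrable M (\<lambda>\<omega>. \<bar>B t \<omega>\<bar> ^ m) \<and> (\<integral>\<omega>. \<bar>B t \<omega>\<bar> ^ m \<partial>M) \<le> 1 + fact (2 * m)"
    by (rule BM_moment[OF BM t])
  have intG: "integrable M (\<lambda>\<omega>. 2 ^ m * (\<bar>a\<bar> ^ m + \<bar>B t \<omega>\<bar> ^ m))"
    using mom by (intro integrable_mult_right Bochner_Integration.integrable_add) auto
  have le: "AE \<omega> in M. \<bar>a + f \<omega>\<bar> ^ m \<le> 2 ^ m * (\<bar>a\<bar> ^ m + \<bar>B t \<omega>\<bar> ^ m)"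
    using ae by (rule eventually_mono) (use abs_add_pow_le in metis)
  have int: "integrable M (\<lambda>\<omega>. \<bar>a + f \<omega>\<bar> ^ m)"
  proof (rule Bochner_Integration.integrable_bound[OF intG])
    show "(\<lambda>\<omega>. \<bar>a + f \<omega>\<bar> ^ m) \<in> borel_measurable M" by measurable
    show "AE \<omega> in M. norm (\<bar>a + f \<omega>\<bar> ^ m) \<le> norm (2 ^ m * (\<bar>a\<bar> ^ m + \<bar>B t \<omega>\<bar> ^ m))"
      using le by (rule eventually_mono) auto
  qed
  have "(\<integral>\<omega>. \<bar>a + f \<omega>\<bar> ^ m \<partial>M) \<le> (\<integral>\<omega>. 2 ^ m * (\<bar>a\<bar> ^ m + \<bar>B t \<omega>\<bar> ^ m) \<partial>M)"
    by (rule integral_mono_AE[OF int intG le])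
  also have "\<dots> = 2 ^ m * (\<bar>a\<bar> ^ m + (\<integral>\<omega>. \<bar>B t \<omega>\<bar> ^ m \<partial>M))"
    using mom by (simp add: prob_space)
  also have "\<dots> \<le> 2 ^ m * (\<bar>a\<bar> ^ m + (1 + fact (2 * m)))"
    using mom by (intro mult_left_mono add_left_mono) auto
  finally show ?thesis using int by simp
qed

lemma abstract_bound:
  fixes \<phi> :: "nat \<Rightarrow> 'w \<Rightarrow> real" and a q :: "nat \<Rightarrow> real"
  assumes ps: "prob_space M" and fin: "finite J"
    and mphi: "\<And>j. j \<in> J \<Longrightarrow> \<phi> j \<in> borel_measurable M"
    and mom: "\<And>j m. j \<in> J \<Longrightarrow> integrable M (\<lambda>\<omega>. \<bar>a j + \<phi> j \<omega>\<bar> ^ m) \<and>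
        (\<integral>\<omega>. \<bar>a j + \<phi> j \<omega>\<bar> ^ m \<partial>M) \<le> 2 ^ m * (\<bar>a j\<bar> ^ m + (1 + fact (2 * m)))"
  shows "integrable M (\<lambda>\<omega>. sqrt (\<Sum>j\<in>J. (q j * (a j + \<phi> j \<omega>))\<^sup>2) ^ p)"
    and "p \<ge> 2 \<Longrightarrow> (\<integral>\<omega>. sqrt (\<Sum>j\<in>J. (q j * (a j + \<phi> j \<omega>))\<^sup>2) ^ p \<partial>M)
         \<le> (\<Sum>j\<in>J. (q j)\<^sup>2) powr (real p / 2 - 1) * (\<Sum>j\<in>J. (q j)\<^sup>2 * (2 ^ p * (\<bar>a j\<bar> ^ p + (1 + fact (2 * p)))))"
proof -
  interpret prob_space M by (rule ps)
  let ?S = "(\<Sum>j\<in>J. (q j)\<^sup>2)"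
  let ?Y = "\<lambda>\<omega>. sqrt (\<Sum>j\<in>J. (q j * (a j + \<phi> j \<omega>))\<^sup>2)"
  have mY: "(\<lambda>\<omega>. sqrt (\<Sum>j\<in>J. (q j * (a j + \<phi> j \<omega>))\<^sup>2) ^ n) \<in> borel_measurable M" for n
  proof -
    have "(\<lambda>\<omega>. \<Sum>j\<in>J. (q j * (a j + \<phi> j \<omega>))\<^sup>2) \<in> borel_measurable M"
    proof (rule borel_measurable_sum)
      fix j assume "j \<in> J"
      then have [measurable]: "\<phi> j \<in> borel_measurable M" by (rule mphi)
      show "(\<lambda>\<omega>. (q j * (a j + \<phi> j \<omega>))\<^sup>2) \<in> borel_measurable M" by measurable
    qed
    then show ?thesis by measurable
  qed
  have bnd: "?Y \<omega> ^ n \<le> ?S powr (real n / 2 - 1) * (\<Sum>j\<in>J. (q j)\<^sup>2 * \<bar>a j + \<phi> j \<omega>\<bar> ^ n)" if "n \<ge> 2" for n \<omega>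
    by (rule norm_pow_bound[OF fin that])
  have intD: "integrable M (\<lambda>\<omega>. ?S powr (real n / 2 - 1) * (\<Sum>j\<in>J. (q j)\<^sup>2 * \<bar>a j + \<phi> j \<omega>\<bar> ^ n))" for n
    using mom by (intro integrable_mult_right integrable_sum) auto
  show "integrable M (\<lambda>\<omega>. ?Y \<omega> ^ p)"
  proof (rule Bochner_Integration.integrable_bound)
    show "integrable M (\<lambda>\<omega>. 1 + ?S powr (real (2 * p + 2) / 2 - 1) * (\<Sum>j\<in>J. (q j)\<^sup>2 * \<bar>a j + \<phi> j \<omega>\<bar> ^ (2 * p + 2)))"
      by (rule Bochner_Integration.integrable_add[OF _ intD]) simp
    show "(\<lambda>\<omega>. ?Y \<omega> ^ p) \<in> borel_measurable M" by (rule mY)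
    show "AE \<omega> in M. norm (?Y \<omega> ^ p) \<le> norm (1 + ?S powr (real (2 * p + 2) / 2 - 1) * (\<Sum>j\<in>J. (q j)\<^sup>2 * \<bar>a j + \<phi> j \<omega>\<bar> ^ (2 * p + 2)))"
    proof (intro AE_I2)
      fix \<omega>
      have Y0: "0 \<le> ?Y \<omega>" by (simp add: sum_nonneg)
      have D0: "0 \<le> ?S powr (real (2 * p + 2) / 2 - 1) * (\<Sum>j\<in>J. (q j)\<^sup>2 * \<bar>a j + \<phi> j \<omega>\<bar> ^ (2 * p + 2))"
        by (intro mult_nonneg_nonneg sum_nonneg) auto
      have "?Y \<omega> ^ p \<le> 1 + ?Y \<omega> ^ (2 * p + 2)" by (rule pow_le_aux[OF Y0])
      also have "\<dots> \<le> 1 + ?S powr (real (2 * p + 2) / 2 - 1) * (\<Sum>j\<in>J. (q j)\<^sup>2 * \<bar>a j + \<phi> j \<omega>\<bar> ^ (2 * p + 2))"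
        using bnd[of "2 * p + 2" \<omega>] by simp
      finally show "norm (?Y \<omega> ^ p) \<le> norm (1 + ?S powr (real (2 * p + 2) / 2 - 1) * (\<Sum>j\<in>J. (q j)\<^sup>2 * \<bar>a j + \<phi> j \<omega>\<bar> ^ (2 * p + 2)))"
        using Y0 D0 by simp
    qed
  qed
  then have intY: "integrable M (\<lambda>\<omega>. ?Y \<omega> ^ p)" .
  assume p2: "p \<ge> 2"
  have "(\<integral>\<omega>. ?Y \<omega> ^ p \<partial>M) \<le> (\<integral>\<omega>. ?S powr (real p / 2 - 1) * (\<Sum>j\<in>J. (q j)\<^sup>2 * \<bar>a j + \<phi> j \<omega>\<bar> ^ p) \<partial>M)"
    by (intro integral_mono intY intD bnd p2)
  also have "\<dots> = ?S powr (real p / 2 - 1) * (\<Sum>j\<in>J. (q j)\<^sup>2 * (\<integral>\<omega>. \<bar>a j + \<phi> j \<omega>\<bar> ^ p \<partial>M))"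
    using mom by (simp add: integral_sum)
  also have "\<dots> \<le> ?S powr (real p / 2 - 1) * (\<Sum>j\<in>J. (q j)\<^sup>2 * (2 ^ p * (\<bar>a j\<bar> ^ p + (1 + fact (2 * p)))))"
    using mom by (intro mult_left_mono sum_mono) auto
  finally show "(\<integral>\<omega>. ?Y \<omega> ^ p \<partial>M) \<le> ?S powr (real p / 2 - 1) * (\<Sum>j\<in>J. (q j)\<^sup>2 * (2 ^ p * (\<bar>a j\<bar> ^ p + (1 + fact (2 * p)))))" .
qed


lemma final_ineq:
  fixes A G X f :: real
  assumes "0 \<le> A" "0 \<le> G" "0 \<le> X" "0 \<le> f"
  shows "A * (G + 1 + f) \<le> (A * (1 + f) + 1) * (1 + X + G)"
proof -
  have "(A * (1 + f) + 1) * (1 + X + G) - A * (G + 1 + f) = A * (1 + f) * X + A * f * G + 1 + X + G"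
    by (simp add: algebra_simps)
  also have "\<dots> \<ge> 0" using assms by (intro add_nonneg_nonneg mult_nonneg_nonneg) auto
  finally show ?thesis by simp
qed

lemma powr_m1_mult: "0 \<le> (x::real) \<Longrightarrow> x powr (r - 1) * x = x powr r"
proof (cases "x = 0")
  case False
  assume "0 \<le> x"
  then have x: "0 < x" using False by simp
  have e1: "x powr 1 = x" using x by simp
  have "x powr (r - 1) * x powr 1 = x powr (r - 1 + 1)" by (rule powr_add[symmetric])
  then show ?thesis using e1 by simp
qed simp

theorem lemma3p10:
  fixes e :: "nat \<Rightarrow> 'a::{real_inner, complete_space}"
    and lam :: "nat \<Rightarrow> real"
    and \<alpha> c_lam C_lam \<beta> :: real
    and V :: "real \<Rightarrow> 'a set" and N :: "real \<Rightarrow> nat"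
    and eh :: "real \<Rightarrow> nat \<Rightarrow> 'a" and lamh :: "real \<Rightarrow> nat \<Rightarrow> real"
    and M :: "'w measure" and B :: "nat \<Rightarrow> real \<Rightarrow> 'w \<Rightarrow> real"
    and d :: nat and C1 C2 h0 r s q :: real
    and p :: nat and t :: real and g :: 'a
  assumes e_orthonormal: "\<forall>i\<ge>1. \<forall>j\<ge>1. inner (e i) (e j) = (if i = j then 1 else 0)"
    and e_complete: "closure (span (e ` {1..})) = UNIV"
    and lam_mono: "\<forall>i\<ge>1. \<forall>j\<ge>i. lam i \<le> lam j"
    and alpha_pos: "\<alpha> > 0" and c_lam_pos: "c_lam > 0" and C_lam_pos: "C_lam > 0"
    and lam_growth: "\<forall>j\<ge>1. c_lam * real j powr \<alpha> \<le> lam j \<and> lam j \<le> C_lam * real j powr \<alpha>"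
    and beta: "0 < \<beta>" "\<beta> < 1"
    and Vh_span: "\<forall>h\<in>{0<..<1}. V h = span (eh h ` {1..N h})"
    and Vh_dom: "\<forall>h\<in>{0<..<1}. V h \<subseteq> form_dom lam e"
    and eh_orthonormal: "\<forall>h\<in>{0<..<1}. \<forall>i\<in>{1..N h}. \<forall>j\<in>{1..N h}.
                           inner (eh h i) (eh h j) = (if i = j then 1 else 0)"
    and eh_eigen: "\<forall>h\<in>{0<..<1}. \<forall>j\<in>{1..N h}.
                     discrete_op (V h) lam e (eh h j) = lamh h j *\<^sub>R eh h j"
    and lamh_mono: "\<forall>h\<in>{0<..<1}. \<forall>i\<in>{1..N h}. \<forall>j\<in>{i..N h}. lamh h i \<le> lamh h j"
    and BM: "prob_space M" "\<forall>j\<ge>1. std_BM M (B j)"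
    and BM_indep: "prob_space.indep_vars M (\<lambda>_. PiM {0..} (\<lambda>_. borel))
                     (\<lambda>j \<omega>. (\<lambda>s\<in>{0::real..}. B j s \<omega>)) {1..}"
    and cond_i: "d \<ge> 1" "\<exists>c0 c1. 0 < c0 \<and> 0 < c1 \<and> (\<forall>h\<in>{0<..<1}.
                     c0 * h powr (- real d) \<le> real (N h) \<and> real (N h) \<le> c1 * h powr (- real d))"
    and cond_ii: "C1 > 0" "C2 > 0" "0 < h0" "h0 < 1" "r > 0" "s > 0" "q > 1"
      "\<forall>h\<in>{0<..<h0}. \<forall>j\<in>{1..N h}.
          lam j \<le> lamh h j \<and> lamh h j \<le> lam j + C1 * h powr r * lam j powr q
          \<and> (norm (e j - eh h j))\<^sup>2 \<le> C2 * h powr (2 * s) * lam j powr q"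
    and cond_iii: "1 / (2 * \<beta>) < \<alpha>" "\<alpha> \<le> min (r / ((q - 1) * real d)) (2 * s / (q * real d))"
    and t_range: "t \<in> {0..1}"
  shows "(\<forall>h\<in>{0<..<1}. \<forall>k>0.
            integrable M (\<lambda>\<omega>. norm (Y_tilde \<beta> lam e (V h) (N h) (eh h) k B g t \<omega>) ^ p))
       \<and> (p \<ge> 2 \<longrightarrow>
          (\<exists>k0 > 0. \<exists>C > 0. \<exists>h1 \<in> {0<..h0}. \<forall>h\<in>{0<..<h1}. \<forall>k\<in>{0<..<k0}.
             integral\<^sup>L M (\<lambda>\<omega>. norm (Y_tilde \<beta> lam e (V h) (N h) (eh h) k B g t \<omega>) ^ p)
             \<le> C * (1 + exp (- real p * pi\<^sup>2 / (2 * k)) * h powr (- real p * real d / 2)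
                      + norm g ^ p)))"
proof -
  have lam_pos: "\<forall>j\<ge>1. 0 < lam j"
  proof (intro allI impI)
    fix j :: nat assume "1 \<le> j"
    then have "0 < c_lam * real j powr \<alpha>" using c_lam_pos by simp
    then show "0 < lam j" using lam_growth \<open>1 \<le> j\<close> by (meson less_le_trans)
  qed
  have lamS: "\<And>j. 0 \<le> lam (Suc j)"
  proof -
    fix j :: nat
    have "0 < lam (Suc j)" using lam_pos by simp
    then show "0 \<le> lam (Suc j)" by simp
  qed
  have ps: "prob_space M" by (rule BM(1))
  have tt: "0 \<le> t" "t \<le> 1" using t_range by auto
  have ab: "1 < 2 * \<alpha> * \<beta>"
    using cond_iii(1) beta by (simp add: field_simps)
  have summ: "summable (\<lambda>i. lam (Suc i) powr (- 2 * \<beta>))"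
  proof (rule summable_comparison_test)
    have "summable (\<lambda>i. real i powr (- 2 * \<alpha> * \<beta>))"
      using ab by (simp add: summable_real_powr_iff)
    then have "summable (\<lambda>i. real (Suc i) powr (- 2 * \<alpha> * \<beta>))"
      by (subst summable_Suc_iff)
    then show "summable (\<lambda>i. c_lam powr (- 2 * \<beta>) * real (Suc i) powr (- 2 * \<alpha> * \<beta>))"
      by (rule summable_mult)
    show "\<exists>N. \<forall>n\<ge>N. norm (lam (Suc n) powr (- 2 * \<beta>)) \<le> c_lam powr (- 2 * \<beta>) * real (Suc n) powr (- 2 * \<alpha> * \<beta>)"
    proof (intro exI allI impI)
      fix n :: nat
      have lg: "c_lam * real (Suc n) powr \<alpha> \<le> lam (Suc n)" using lam_growth by auto
      have pos: "0 < c_lam * real (Suc n) powr \<alpha>" using c_lam_pos by simp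
      have "lam (Suc n) powr (- 2 * \<beta>) \<le> (c_lam * real (Suc n) powr \<alpha>) powr (- 2 * \<beta>)"
        using beta pos lg by (intro powr_mono2') auto
      also have "\<dots> = c_lam powr (- 2 * \<beta>) * real (Suc n) powr (- 2 * \<alpha> * \<beta>)"
        using c_lam_pos by (simp add: powr_mult powr_powr mult_ac)
      finally show "norm (lam (Suc n) powr (- 2 * \<beta>)) \<le> c_lam powr (- 2 * \<beta>) * real (Suc n) powr (- 2 * \<alpha> * \<beta>)"
        by simp
    qed
  qed
  define \<Phi> where "\<Phi> j \<omega> = lam j powr \<beta> * inner (W_beta \<beta> lam e B t \<omega>) (e j)" for j \<omega>
  have mphi: "\<Phi> j \<in> borel_measurable M" if "1 \<le> j" for j
    unfolding \<Phi>_def[abs_def] by (rule phi_props(1)[OF e_orthonormal lam_pos BM(2) ps tt summ that])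
  have aephi: "AE \<omega> in M. \<Phi> j \<omega> = B j t \<omega>" if "1 \<le> j" for j
    unfolding \<Phi>_def by (rule phi_props(2)[OF e_orthonormal lam_pos BM(2) ps tt summ that])
  have mom: "integrable M (\<lambda>\<omega>. \<bar>a + \<Phi> j \<omega>\<bar> ^ m) \<and> (\<integral>\<omega>. \<bar>a + \<Phi> j \<omega>\<bar> ^ m \<partial>M) \<le> 2 ^ m * (\<bar>a\<bar> ^ m + (1 + fact (2 * m)))"
    if "1 \<le> j" for j m a
  proof -
    have "std_BM M (B j)" using BM(2) that by auto
    from shift_moment[where B="B j" and f="\<Phi> j", OF this tt mphi[OF that] aephi[OF that]]
    show ?thesis .
  qed
  have ons: "ONS (eh h) (N h)" if "h \<in> {0<..<1}" for h
    using eh_orthonormal that unfolding ONS_def by blast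
  have Ynorm: "norm (Y_tilde \<beta> lam e (V h) (N h) (eh h) k B g t \<omega>)
      = sqrt (\<Sum>j=1..N h. (qf \<beta> k (lamh h j) * (inner g (eh h j) + \<Phi> j \<omega>))\<^sup>2)"
    if h: "h \<in> {0<..<1}" for h k \<omega>
  proof -
    have V: "V h = span (eh h ` {1..N h})" using Vh_span h by blast
    have dom: "span (eh h ` {1..N h}) \<subseteq> form_dom lam e" using Vh_dom h V by blast
    have eig: "\<And>j. j \<in> {1..N h} \<Longrightarrow> discrete_op (span (eh h ` {1..N h})) lam e (eh h j) = lamh h j *\<^sub>R eh h j"
    proof -
      fix j assume j: "j \<in> {1..N h}"
      have "discrete_op (V h) lam e (eh h j) = lamh h j *\<^sub>R eh h j" using eh_eigen h j by blast
      then show "discrete_op (span (eh h ` {1..N h})) lam e (eh h j) = lamh h j *\<^sub>R eh h j" unfolding V .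
    qed
    show ?thesis unfolding V \<Phi>_def by (rule Y_tilde_norm[OF ons[OF h] lamS dom eig])
  qed
  have absb: "\<And>h. h \<in> {0<..<1} \<Longrightarrow> (\<And>j m. j \<in> {1..N h} \<Longrightarrow> integrable M (\<lambda>\<omega>. \<bar>inner g (eh h j) + \<Phi> j \<omega>\<bar> ^ m) \<and>
        (\<integral>\<omega>. \<bar>inner g (eh h j) + \<Phi> j \<omega>\<bar> ^ m \<partial>M) \<le> 2 ^ m * (\<bar>inner g (eh h j)\<bar> ^ m + (1 + fact (2 * m))))"
    using mom by auto
  have mphi': "\<And>j. j \<in> {1..N h} \<Longrightarrow> \<Phi> j \<in> borel_measurable M" for h :: real using mphi by auto
  show ?thesis
  proof (intro conjI ballI allI impI)
    fix h :: real and k :: real assume h: "h \<in> {0<..<1}" and k: "0 < k"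
    have eq: "(\<lambda>\<omega>. norm (Y_tilde \<beta> lam e (V h) (N h) (eh h) k B g t \<omega>) ^ p)
        = (\<lambda>\<omega>. sqrt (\<Sum>j=1..N h. (qf \<beta> k (lamh h j) * (inner g (eh h j) + \<Phi> j \<omega>))\<^sup>2) ^ p)"
      using Ynorm[OF h] by simp
    show "integrable M (\<lambda>\<omega>. norm (Y_tilde \<beta> lam e (V h) (N h) (eh h) k B g t \<omega>) ^ p)"
      unfolding eq by (rule abstract_bound(1)[OF ps _ mphi' absb[OF h]]) auto
  next
    assume p2: "2 \<le> p"
    define \<Lambda> where "\<Lambda> = (\<Sum>i. lam (Suc i) powr (- 2 * \<beta>))"
    define Sb where "Sb = (Kq \<beta>)\<^sup>2 * \<Lambda>"
    define A where "A = Sb powr (real p / 2) * 2 ^ p"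
    define C where "C = A * (1 + fact (2 * p)) + 1"
    have \<Lambda>0: "0 \<le> \<Lambda>" unfolding \<Lambda>_def using summ by (intro suminf_nonneg) auto
    have Sb0: "0 \<le> Sb" unfolding Sb_def using \<Lambda>0 by simp
    have A0: "0 \<le> A" unfolding A_def by simp
    have C0: "0 < C" unfolding C_def using A0 by (simp add: add_nonneg_pos)
    have main: "\<forall>h\<in>{0<..<h0}. \<forall>k\<in>{0<..<1}.
             integral\<^sup>L M (\<lambda>\<omega>. norm (Y_tilde \<beta> lam e (V h) (N h) (eh h) k B g t \<omega>) ^ p)
             \<le> C * (1 + exp (- real p * pi\<^sup>2 / (2 * k)) * h powr (- real p * real d / 2) + norm g ^ p)"
    proof (intro ballI)
      fix h :: real and k :: real assume h: "h \<in> {0<..<h0}" and k: "k \<in> {0<..<1}"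
      have h1: "h \<in> {0<..<1}" using h cond_ii(4) by auto
      let ?n = "N h"
      let ?q = "\<lambda>j. qf \<beta> k (lamh h j)"
      let ?a = "\<lambda>j. inner g (eh h j)"
      define S where "S = (\<Sum>j=1..?n. (?q j)\<^sup>2)"
      have S0: "0 \<le> S" unfolding S_def by (simp add: sum_nonneg)
      have qb: "(?q j)\<^sup>2 \<le> (Kq \<beta>)\<^sup>2 * lam j powr (- 2 * \<beta>)" if j: "j \<in> {1..?n}" for j
      proof -
        have lj: "0 < lam j" using lam_pos j by auto
        have lh: "lam j \<le> lamh h j" using cond_ii(8) h j by auto
        have lhp: "0 < lamh h j" using lj lh by simp
        have kk: "0 < k" "k \<le> 1" using k by auto
        note qfb = qf_bound[OF beta kk lhp]
        have "(?q j)\<^sup>2 \<le> (Kq \<beta> * lamh h j powr (- \<beta>))\<^sup>2"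
          using qfb by (intro power_mono) auto
        also have "\<dots> = (Kq \<beta>)\<^sup>2 * lamh h j powr (- 2 * \<beta>)"
          using lhp by (simp add: power_mult_distrib power2_eq_square powr_add[symmetric])
        also have "\<dots> \<le> (Kq \<beta>)\<^sup>2 * lam j powr (- 2 * \<beta>)"
          using lj lh beta by (intro mult_left_mono powr_mono2') auto
        finally show ?thesis .
      qed
      have SSb: "S \<le> Sb"
      proof -
        have "S \<le> (\<Sum>j=1..?n. (Kq \<beta>)\<^sup>2 * lam j powr (- 2 * \<beta>))"
          unfolding S_def by (intro sum_mono qb)
        also have "\<dots> = (Kq \<beta>)\<^sup>2 * (\<Sum>i<?n. lam (Suc i) powr (- 2 * \<beta>))"
          by (simp add: sum_distrib_left sum.atLeast1_atMost_eq)
        also have "\<dots> \<le> (Kq \<beta>)\<^sup>2 * \<Lambda>"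
          unfolding \<Lambda>_def using summ by (intro mult_left_mono sum_le_suminf) auto
        finally show ?thesis unfolding Sb_def .
      qed
      have ab: "\<bar>?a j\<bar> \<le> norm g" if j: "j \<in> {1..?n}" for j
      proof -
        have "norm (eh h j) = 1" using ons[OF h1] j unfolding ONS_def by (simp add: norm_eq_sqrt_inner)
        then show ?thesis using Cauchy_Schwarz_ineq2[of g "eh h j"] by simp
      qed
      have eq: "(\<lambda>\<omega>. norm (Y_tilde \<beta> lam e (V h) (N h) (eh h) k B g t \<omega>) ^ p)
          = (\<lambda>\<omega>. sqrt (\<Sum>j=1..N h. (?q j * (?a j + \<Phi> j \<omega>))\<^sup>2) ^ p)"
        using Ynorm[OF h1] by simp
      define D where "D = 2 ^ p * (norm g ^ p + (1 + fact (2 * p)))"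
      have D0: "0 \<le> D" unfolding D_def by simp
      have "integral\<^sup>L M (\<lambda>\<omega>. norm (Y_tilde \<beta> lam e (V h) (N h) (eh h) k B g t \<omega>) ^ p)
          \<le> S powr (real p / 2 - 1) * (\<Sum>j=1..?n. (?q j)\<^sup>2 * (2 ^ p * (\<bar>?a j\<bar> ^ p + (1 + fact (2 * p)))))"
        unfolding eq S_def by (rule abstract_bound(2)[OF ps _ mphi' absb[OF h1] p2]) auto
      also have "\<dots> \<le> S powr (real p / 2 - 1) * (\<Sum>j=1..?n. (?q j)\<^sup>2 * D)"
        unfolding D_def using ab
        by (intro mult_left_mono sum_mono mult_left_mono add_right_mono power_mono) auto
      also have "\<dots> = S powr (real p / 2 - 1) * S * D"
        unfolding S_def by (simp add: sum_distrib_right mult.assoc)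
      also have "\<dots> = S powr (real p / 2) * D" using S0 by (simp add: powr_m1_mult)
      also have "\<dots> \<le> Sb powr (real p / 2) * D"
        using S0 SSb D0 by (intro mult_right_mono powr_mono2) auto
      also have "\<dots> = A * (norm g ^ p + 1 + fact (2 * p))"
        unfolding A_def D_def by (simp add: algebra_simps)
      also have "\<dots> \<le> C * (1 + exp (- real p * pi\<^sup>2 / (2 * k)) * h powr (- real p * real d / 2) + norm g ^ p)"
        unfolding C_def using A0 by (intro final_ineq) auto
      finally show "integral\<^sup>L M (\<lambda>\<omega>. norm (Y_tilde \<beta> lam e (V h) (N h) (eh h) k B g t \<omega>) ^ p)
             \<le> C * (1 + exp (- real p * pi\<^sup>2 / (2 * k)) * h powr (- real p * real d / 2) + norm g ^ p)" .
    qed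
    show "\<exists>k0>0. \<exists>C>0. \<exists>h1\<in>{0<..h0}. \<forall>h\<in>{0<..<h1}. \<forall>k\<in>{0<..<k0}.
             integral\<^sup>L M (\<lambda>\<omega>. norm (Y_tilde \<beta> lam e (V h) (N h) (eh h) k B g t \<omega>) ^ p)
             \<le> C * (1 + exp (- real p * pi\<^sup>2 / (2 * k)) * h powr (- real p * real d / 2) + norm g ^ p)"
      using main C0 cond_ii(3) by (intro exI[of _ "1::real"] exI[of _ C] bexI[of _ h0] conjI) auto
  qed
qed


end
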